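(* Let $Z$ be a stationary and isotropic centered unit variance Gaussian random field on $\mathbb{R}^d$ with covariance $\mathbb{E}[Z(x)Z(y)]=R(\|x-y\|)$, $R:[0,\infty)\rightarrow\mathbb{R}$. Let $\Xi_0=\{x:\,Z(x)\geq0\}$. Then for $r\in[0,\infty)$ the second-order characteristics of $(\Xi_0,Z)$ are \begin{align*} E(r)&=\sqrt{\tfrac{\pi}{2}}\,\frac{1+R(r)}{\arcsin(R(r))+\frac{\pi}{2}},\\ \mathrm{cov}(r)&=R(r)+\frac{\sqrt{1-R(r)^2}}{\arcsin(R(r))+\frac{\pi}{2}}-\frac{\pi}{2}\frac{(1+R(r))^2}{(\arcsin(R(r))+\frac{\pi}{2})^2},\\ \gamma(r)&=(1-R(r))\left(1-\frac{\sqrt{1-R(r)^2}}{\arcsin(R(r))+\frac{\pi}{2}}\right),\\ k_{mm}(r)&=\frac{\pi}{2}\left(R(r)+\frac{\sqrt{1-R(r)^2}}{\arcsin(R(r))+\frac{\pi}{2}}\right),\\ \mathrm{cor}(r)&=\frac{R(r)(\arcsin R(r)+\frac{\pi}{2})^2+\sqrt{1-R(r)^2}(\arcsin R(r)+\frac{\pi}{2})-\frac{\pi}{2}(1+R(r))^2}{(\arcsin R(r)+\frac{\pi}{2})^2+R(r)\sqrt{1-R(r)^2}(\arcsin R(r)+\frac{\pi}{2})-\frac{\pi}{2}(1+R(r))^2}. \end{align*}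
   Context: For $h\in\mathbb{R}^d$ with $\|h\|=r$ let $A_h=\{Z(o)\geq0,\,Z(h)\geq0\}$ ($o$ the origin). The characteristics are the conditional moments: $\kappa_e(h)=\mathbb{E}[Z(o)\mid A_h]$, $\kappa_c(h)=\mathbb{E}[Z(o)Z(h)\mid A_h]$, $\kappa_v(h)=\mathbb{E}[Z(o)^2\mid A_h]$; $E(r)=\kappa_e(h)$; mark variogram $\gamma(r)=\tfrac12(\kappa_v(h)+\kappa_v(-h))-\kappa_c(h)$; mark covariance $\mathrm{cov}(r)=\kappa_c(h)-\kappa_e(h)\kappa_e(-h)$; mark correlation $\mathrm{cor}(r)=\mathrm{cov}(r)/\big((\kappa_v(h)-\kappa_e(h)^2)^{1/2}(\kappa_v(-h)-\kappa_e(-h)^2)^{1/2}\big)$; Stoyan's function $k_{mm}(r)=\overline{m}^{-2}\kappa_c(h)$ with mean mark $\overline{m}=\mathbb{E}[Z(o)\mid Z(o)\geq0]$. (These are the paper's characteristics of the random marked set $(\Xi_0,Z)$, which reduce to these conditional expectations since $\mathbb{P}(A_h)>0$.) *)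

theory Defs
  imports "HOL-Probability.Probability"
begin

definition real_normal_rv :: "'w measure \<Rightarrow> ('w \<Rightarrow> real) \<Rightarrow> bool" where
  "real_normal_rv M X \<longleftrightarrow> X \<in> borel_measurable M \<and>
     (\<exists>\<mu> \<sigma>::real. \<sigma> \<ge> 0 \<and>
        (if \<sigma> = 0 then (AE \<omega> in M. X \<omega> = \<mu>)
         else distributed M lborel X (\<lambda>x. ennreal (normal_density \<mu> \<sigma> x))))"

text \<open>Gaussian random field: all finite-dimensional distributions are Gaussian,
  i.e. every finite linear combination of field values is normally distributed.\<close>
definition gaussian_field :: "'w measure \<Rightarrow> ('a \<Rightarrow> 'w \<Rightarrow> real) \<Rightarrow> bool" where
  "gaussian_field M Z \<longleftrightarrow> prob_space M \<and> (\<forall>x. Z x \<in> borel_measurable M) \<and>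
     (\<forall>F (c::'a \<Rightarrow> real). finite F \<longrightarrow> real_normal_rv M (\<lambda>\<omega>. \<Sum>x\<in>F. c x * Z x \<omega>))"

definition cond_exp_event :: "'w measure \<Rightarrow> ('w \<Rightarrow> real) \<Rightarrow> 'w set \<Rightarrow> real" where
  "cond_exp_event M X A = (\<integral>\<omega>. indicator A \<omega> * X \<omega> \<partial>M) / measure M A"

definition event_A :: "'w measure \<Rightarrow> ('a::real_vector \<Rightarrow> 'w \<Rightarrow> real) \<Rightarrow> 'a \<Rightarrow> 'w set" where
  "event_A M Z h = {\<omega> \<in> space M. Z 0 \<omega> \<ge> 0 \<and> Z h \<omega> \<ge> 0}"

definition kappa_e :: "'w measure \<Rightarrow> ('a::real_vector \<Rightarrow> 'w \<Rightarrow> real) \<Rightarrow> 'a \<Rightarrow> real" where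
  "kappa_e M Z h = cond_exp_event M (Z 0) (event_A M Z h)"

definition kappa_c :: "'w measure \<Rightarrow> ('a::real_vector \<Rightarrow> 'w \<Rightarrow> real) \<Rightarrow> 'a \<Rightarrow> real" where
  "kappa_c M Z h = cond_exp_event M (\<lambda>\<omega>. Z 0 \<omega> * Z h \<omega>) (event_A M Z h)"

definition kappa_v :: "'w measure \<Rightarrow> ('a::real_vector \<Rightarrow> 'w \<Rightarrow> real) \<Rightarrow> 'a \<Rightarrow> real" where
  "kappa_v M Z h = cond_exp_event M (\<lambda>\<omega>. (Z 0 \<omega>)\<^sup>2) (event_A M Z h)"

definition mark_E :: "'w measure \<Rightarrow> ('a::real_vector \<Rightarrow> 'w \<Rightarrow> real) \<Rightarrow> 'a \<Rightarrow> real" where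
  "mark_E M Z h = kappa_e M Z h"

definition mark_variogram :: "'w measure \<Rightarrow> ('a::real_vector \<Rightarrow> 'w \<Rightarrow> real) \<Rightarrow> 'a \<Rightarrow> real" where
  "mark_variogram M Z h = (kappa_v M Z h + kappa_v M Z (-h)) / 2 - kappa_c M Z h"

definition mark_cov :: "'w measure \<Rightarrow> ('a::real_vector \<Rightarrow> 'w \<Rightarrow> real) \<Rightarrow> 'a \<Rightarrow> real" where
  "mark_cov M Z h = kappa_c M Z h - kappa_e M Z h * kappa_e M Z (-h)"

definition mark_cor :: "'w measure \<Rightarrow> ('a::real_vector \<Rightarrow> 'w \<Rightarrow> real) \<Rightarrow> 'a \<Rightarrow> real" where
  "mark_cor M Z h = mark_cov M Z h /
     (sqrt (kappa_v M Z h - (kappa_e M Z h)\<^sup>2) * sqrt (kappa_v M Z (-h) - (kappa_e M Z (-h))\<^sup>2))"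

definition mean_mark :: "'w measure \<Rightarrow> ('a::real_vector \<Rightarrow> 'w \<Rightarrow> real) \<Rightarrow> real" where
  "mean_mark M Z = cond_exp_event M (Z 0) {\<omega> \<in> space M. Z 0 \<omega> \<ge> 0}"

definition stoyan_kmm :: "'w measure \<Rightarrow> ('a::real_vector \<Rightarrow> 'w \<Rightarrow> real) \<Rightarrow> 'a \<Rightarrow> real" where
  "stoyan_kmm M Z h = kappa_c M Z h / (mean_mark M Z)\<^sup>2"

end

theory Submission
  imports Defs
begin

lemma iexp_cis: "iexp x = complex_of_real (cos x) + \<i> * complex_of_real (sin x)"
  by (simp add: cis_conv_exp[symmetric] cis.ctr complex_eq_iff)

lemma iexp_integral_split:
  fixes M :: "'w measure" and f g :: "'w \<Rightarrow> real"
  assumes "finite_measure M" and [measurable]: "f \<in> borel_measurable M" "g \<in> borel_measurable M"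
    and bnd: "\<And>\<omega>. \<omega> \<in> space M \<Longrightarrow> \<bar>g \<omega>\<bar> \<le> K"
  shows "(\<integral>\<omega>. g \<omega> *\<^sub>R iexp (f \<omega>) \<partial>M) =
    complex_of_real (\<integral>\<omega>. g \<omega> * cos (f \<omega>) \<partial>M) + \<i> * complex_of_real (\<integral>\<omega>. g \<omega> * sin (f \<omega>) \<partial>M)"
proof -
  interpret finite_measure M by fact
  have i1: "integrable M (\<lambda>\<omega>. g \<omega> * cos (f \<omega>))"
    by (rule integrable_const_bound[where B=K]) (auto intro!: AE_I2 simp: abs_mult intro: order_trans[OF mult_left_le] bnd)
  have i2: "integrable M (\<lambda>\<omega>. g \<omega> * sin (f \<omega>))"
    by (rule integrable_const_bound[where B=K]) (auto intro!: AE_I2 simp: abs_mult intro: order_trans[OF mult_left_le] bnd)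
  have "(\<lambda>\<omega>. g \<omega> *\<^sub>R iexp (f \<omega>)) = (\<lambda>\<omega>. complex_of_real (g \<omega> * cos (f \<omega>)) + \<i> * complex_of_real (g \<omega> * sin (f \<omega>)))"
    by (auto simp: iexp_cis scaleR_conv_of_real algebra_simps)
  moreover have "(\<integral>\<omega>. complex_of_real (g \<omega> * cos (f \<omega>)) + \<i> * complex_of_real (g \<omega> * sin (f \<omega>)) \<partial>M)
     = (\<integral>\<omega>. complex_of_real (g \<omega> * cos (f \<omega>)) \<partial>M) + (\<integral>\<omega>. \<i> * complex_of_real (g \<omega> * sin (f \<omega>)) \<partial>M)"
    by (rule Bochner_Integration.integral_add) (use i1 i2 in \<open>auto simp del: of_real_mult\<close>)
  moreover have "(\<integral>\<omega>. \<i> * complex_of_real (g \<omega> * sin (f \<omega>)) \<partial>M) = \<i> * (\<integral>\<omega>. complex_of_real (g \<omega> * sin (f \<omega>)) \<partial>M)"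
    by (rule integral_mult_right_zero)
  ultimately show ?thesis
    by (simp only: integral_complex_of_real)
qed

lemma integral_distr_density:
  fixes F :: "real \<Rightarrow> 'b::{banach, second_countable_topology}"
  assumes [measurable]: "Y \<in> borel_measurable M" "w \<in> borel_measurable M" "F \<in> borel_measurable borel"
    and nn: "\<And>\<omega>. \<omega> \<in> space M \<Longrightarrow> 0 \<le> w \<omega>"
  shows "(\<integral>x. F x \<partial>distr (density M (\<lambda>\<omega>. ennreal (w \<omega>))) borel Y) = (\<integral>\<omega>. w \<omega> *\<^sub>R F (Y \<omega>) \<partial>M)"
proof -
  have "Y \<in> measurable (density M (\<lambda>\<omega>. ennreal (w \<omega>))) borel" by simp
  then have "(\<integral>x. F x \<partial>distr (density M (\<lambda>\<omega>. ennreal (w \<omega>))) borel Y) = (\<integral>\<omega>. F (Y \<omega>) \<partial>density M (\<lambda>\<omega>. ennreal (w \<omega>)))"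
    by (rule integral_distr) simp
  also have "\<dots> = (\<integral>\<omega>. w \<omega> *\<^sub>R F (Y \<omega>) \<partial>M)"
    by (rule integral_density) (auto intro!: AE_I2 nn)
  finally show ?thesis .
qed

lemma levy_weighted:
  fixes M1 :: "'w measure" and M2 :: "'v measure" and g1 Y1 :: "'w \<Rightarrow> real" and g2 Y2 :: "'v \<Rightarrow> real"
  assumes P1: "prob_space M1" and P2: "prob_space M2"
    and [measurable]: "Y1 \<in> borel_measurable M1" "Y2 \<in> borel_measurable M2"
      "g1 \<in> borel_measurable M1" "g2 \<in> borel_measurable M2"
    and nn1: "\<And>\<omega>. \<omega> \<in> space M1 \<Longrightarrow> 0 \<le> g1 \<omega> \<and> g1 \<omega> \<le> K"
    and nn2: "\<And>\<omega>. \<omega> \<in> space M2 \<Longrightarrow> 0 \<le> g2 \<omega> \<and> g2 \<omega> \<le> K"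
    and hc: "\<And>t. (\<integral>\<omega>. g1 \<omega> * cos (t * Y1 \<omega>) \<partial>M1) = (\<integral>\<omega>. g2 \<omega> * cos (t * Y2 \<omega>) \<partial>M2)"
    and hs: "\<And>t. (\<integral>\<omega>. g1 \<omega> * sin (t * Y1 \<omega>) \<partial>M1) = (\<integral>\<omega>. g2 \<omega> * sin (t * Y2 \<omega>) \<partial>M2)"
    and B[measurable]: "B \<in> sets borel"
  shows "(\<integral>\<omega>. g1 \<omega> * indicator B (Y1 \<omega>) \<partial>M1) = (\<integral>\<omega>. g2 \<omega> * indicator B (Y2 \<omega>) \<partial>M2)"
proof -
  interpret M1: prob_space M1 by fact
  interpret M2: prob_space M2 by fact
  have int1: "integrable M1 (\<lambda>\<omega>. g1 \<omega> * f \<omega>)" if [measurable]: "f \<in> borel_measurable M1" "\<And>\<omega>. \<omega> \<in> space M1 \<Longrightarrow> \<bar>f \<omega>\<bar> \<le> 1" for f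
  proof (rule M1.integrable_const_bound[where B=K])
    show "AE \<omega> in M1. norm (g1 \<omega> * f \<omega>) \<le> K"
    proof (rule AE_I2)
      fix \<omega> assume w: "\<omega> \<in> space M1"
      have "norm (g1 \<omega> * f \<omega>) = g1 \<omega> * \<bar>f \<omega>\<bar>" using nn1[OF w] by (simp add: abs_mult)
      also have "\<dots> \<le> g1 \<omega> * 1" by (rule mult_left_mono) (use nn1[OF w] that(2)[OF w] in auto)
      finally show "norm (g1 \<omega> * f \<omega>) \<le> K" using nn1[OF w] by simp
    qed
  qed simp
  have int2: "integrable M2 (\<lambda>\<omega>. g2 \<omega> * f \<omega>)" if [measurable]: "f \<in> borel_measurable M2" "\<And>\<omega>. \<omega> \<in> space M2 \<Longrightarrow> \<bar>f \<omega>\<bar> \<le> 1" for f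
  proof (rule M2.integrable_const_bound[where B=K])
    show "AE \<omega> in M2. norm (g2 \<omega> * f \<omega>) \<le> K"
    proof (rule AE_I2)
      fix \<omega> assume w: "\<omega> \<in> space M2"
      have "norm (g2 \<omega> * f \<omega>) = g2 \<omega> * \<bar>f \<omega>\<bar>" using nn2[OF w] by (simp add: abs_mult)
      also have "\<dots> \<le> g2 \<omega> * 1" by (rule mult_left_mono) (use nn2[OF w] that(2)[OF w] in auto)
      finally show "norm (g2 \<omega> * f \<omega>) \<le> K" using nn2[OF w] by simp
    qed
  qed simp
  define m where "m = (\<integral>\<omega>. g1 \<omega> \<partial>M1)"
  have m2: "m = (\<integral>\<omega>. g2 \<omega> \<partial>M2)"
    using hc[of 0] by (simp add: m_def)
  have g1i: "integrable M1 g1" using int1[of "\<lambda>_. 1"] by simp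
  have g2i: "integrable M2 g2" using int2[of "\<lambda>_. 1"] by simp
  have "m \<ge> 0" unfolding m_def by (rule integral_nonneg_AE) (auto intro!: AE_I2 dest: nn1)
  show ?thesis
  proof (cases "m = 0")
    case True
    have "AE \<omega> in M1. g1 \<omega> = 0"
      using integral_nonneg_eq_0_iff_AE[OF g1i] True m_def nn1 by (auto intro!: AE_I2)
    then have L: "(\<integral>\<omega>. g1 \<omega> * indicator B (Y1 \<omega>) \<partial>M1) = 0"
      by (subst integral_cong_AE[where g="\<lambda>_. 0"]) auto
    have "AE \<omega> in M2. g2 \<omega> = 0"
      using integral_nonneg_eq_0_iff_AE[OF g2i] True m2 nn2 by (auto intro!: AE_I2)
    then have R: "(\<integral>\<omega>. g2 \<omega> * indicator B (Y2 \<omega>) \<partial>M2) = 0"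
      by (subst integral_cong_AE[where g="\<lambda>_. 0"]) auto
    show ?thesis using L R by simp
  next
    case False
    with \<open>m \<ge> 0\<close> have mpos: "m > 0" by simp
    define \<nu>1 where "\<nu>1 = distr (density M1 (\<lambda>\<omega>. ennreal (g1 \<omega> / m))) borel Y1"
    define \<nu>2 where "\<nu>2 = distr (density M2 (\<lambda>\<omega>. ennreal (g2 \<omega> / m))) borel Y2"
    have I1: "(\<integral>x. F x \<partial>\<nu>1) = (\<integral>\<omega>. (g1 \<omega> / m) *\<^sub>R F (Y1 \<omega>) \<partial>M1)" if [measurable]: "F \<in> borel_measurable borel"
      for F :: "real \<Rightarrow> 'c::{banach, second_countable_topology}"
      unfolding \<nu>1_def by (rule integral_distr_density) (use mpos nn1 in auto)
    have I2: "(\<integral>x. F x \<partial>\<nu>2) = (\<integral>\<omega>. (g2 \<omega> / m) *\<^sub>R F (Y2 \<omega>) \<partial>M2)" if [measurable]: "F \<in> borel_measurable borel"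
      for F :: "real \<Rightarrow> 'c::{banach, second_countable_topology}"
      unfolding \<nu>2_def by (rule integral_distr_density) (use mpos nn2 in auto)
    have rd1: "real_distribution \<nu>1"
    proof -
      have "prob_space (density M1 (\<lambda>\<omega>. ennreal (g1 \<omega> / m)))"
      proof
        have "emeasure (density M1 (\<lambda>\<omega>. ennreal (g1 \<omega> / m))) (space M1) = (\<integral>\<^sup>+\<omega>. ennreal (g1 \<omega> / m) \<partial>M1)"
          by (subst emeasure_density) (auto intro!: nn_integral_cong)
        also have "\<dots> = ennreal (\<integral>\<omega>. g1 \<omega> / m \<partial>M1)"
          by (rule nn_integral_eq_integral) (use g1i nn1 mpos in auto)
        also have "\<dots> = 1" using mpos by (simp add: m_def)
        finally show "emeasure (density M1 (\<lambda>\<omega>. ennreal (g1 \<omega> / m))) (space (density M1 (\<lambda>\<omega>. ennreal (g1 \<omega> / m)))) = 1"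
          by simp
      qed
      then have "prob_space \<nu>1" unfolding \<nu>1_def by (rule prob_space.prob_space_distr) simp
      then show ?thesis unfolding real_distribution_def real_distribution_axioms_def \<nu>1_def by simp
    qed
    have rd2: "real_distribution \<nu>2"
    proof -
      have "prob_space (density M2 (\<lambda>\<omega>. ennreal (g2 \<omega> / m)))"
      proof
        have "emeasure (density M2 (\<lambda>\<omega>. ennreal (g2 \<omega> / m))) (space M2) = (\<integral>\<^sup>+\<omega>. ennreal (g2 \<omega> / m) \<partial>M2)"
          by (subst emeasure_density) (auto intro!: nn_integral_cong)
        also have "\<dots> = ennreal (\<integral>\<omega>. g2 \<omega> / m \<partial>M2)"
          by (rule nn_integral_eq_integral) (use g2i nn2 mpos in auto)
        also have "\<dots> = 1" using mpos by (simp add: m2)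
        finally show "emeasure (density M2 (\<lambda>\<omega>. ennreal (g2 \<omega> / m))) (space (density M2 (\<lambda>\<omega>. ennreal (g2 \<omega> / m)))) = 1"
          by simp
      qed
      then have "prob_space \<nu>2" unfolding \<nu>2_def by (rule prob_space.prob_space_distr) simp
      then show ?thesis unfolding real_distribution_def real_distribution_axioms_def \<nu>2_def by simp
    qed
    have "char \<nu>1 = char \<nu>2"
    proof
      fix t
      have "char \<nu>1 t = (\<integral>\<omega>. (g1 \<omega> / m) *\<^sub>R iexp (t * Y1 \<omega>) \<partial>M1)"
        unfolding char_def by (rule I1) simp
      also have "\<dots> = complex_of_real (\<integral>\<omega>. g1 \<omega> / m * cos (t * Y1 \<omega>) \<partial>M1) + \<i> * complex_of_real (\<integral>\<omega>. g1 \<omega> / m * sin (t * Y1 \<omega>) \<partial>M1)"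
        by (rule iexp_integral_split[where K="K/m"]) (use mpos nn1 in \<open>auto intro!: divide_right_mono simp: M1.finite_measure_axioms\<close>)
      also have "\<dots> = complex_of_real (\<integral>\<omega>. g2 \<omega> / m * cos (t * Y2 \<omega>) \<partial>M2) + \<i> * complex_of_real (\<integral>\<omega>. g2 \<omega> / m * sin (t * Y2 \<omega>) \<partial>M2)"
        using hc[of t] hs[of t] by (simp add: divide_simps)
      also have "\<dots> = (\<integral>\<omega>. (g2 \<omega> / m) *\<^sub>R iexp (t * Y2 \<omega>) \<partial>M2)"
        by (rule iexp_integral_split[where K="K/m", symmetric]) (use mpos nn2 in \<open>auto intro!: divide_right_mono simp: M2.finite_measure_axioms\<close>)
      also have "\<dots> = char \<nu>2 t"
        unfolding char_def by (rule I2[symmetric]) simp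
      finally show "char \<nu>1 t = char \<nu>2 t" .
    qed
    then have "\<nu>1 = \<nu>2" by (rule Levy_uniqueness[OF rd1 rd2])
    have "(\<integral>\<omega>. (g1 \<omega> / m) *\<^sub>R (indicator B (Y1 \<omega>) :: real) \<partial>M1) = (\<integral>\<omega>. (g2 \<omega> / m) *\<^sub>R indicator B (Y2 \<omega>) \<partial>M2)"
      unfolding I1[OF borel_measurable_indicator[OF B], symmetric] I2[OF borel_measurable_indicator[OF B], symmetric] \<open>\<nu>1 = \<nu>2\<close> ..
    then have "(\<integral>\<omega>. (g1 \<omega> / m) * indicator B (Y1 \<omega>) \<partial>M1) = (\<integral>\<omega>. (g2 \<omega> / m) * indicator B (Y2 \<omega>) \<partial>M2)"
      by simp
    then show ?thesis using mpos by (simp add: divide_simps)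
  qed
qed

lemma int_bounded:
  fixes f :: "'w \<Rightarrow> real"
  assumes "prob_space M" "f \<in> borel_measurable M" "\<And>\<omega>. \<omega> \<in> space M \<Longrightarrow> \<bar>f \<omega>\<bar> \<le> K"
  shows "integrable M f"
proof -
  interpret prob_space M by fact
  show ?thesis by (rule integrable_const_bound[where B=K]) (use assms in \<open>auto intro!: AE_I2\<close>)
qed

lemma int_cos[simp]: fixes f :: "'w \<Rightarrow> real" shows "prob_space M \<Longrightarrow> f \<in> borel_measurable M \<Longrightarrow> integrable M (\<lambda>\<omega>. cos (f \<omega>))"
  by (rule int_bounded[where K=1]) auto
lemma int_sin[simp]: fixes f :: "'w \<Rightarrow> real" shows "prob_space M \<Longrightarrow> f \<in> borel_measurable M \<Longrightarrow> integrable M (\<lambda>\<omega>. sin (f \<omega>))"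
  by (rule int_bounded[where K=1]) auto

lemma trig_ids:
  fixes M :: "'w measure" and X Y :: "'w \<Rightarrow> real"
  assumes P: "prob_space M" and [measurable]: "X \<in> borel_measurable M" "Y \<in> borel_measurable M"
  shows "(\<integral>\<omega>. (1 + cos (s * X \<omega>)) * cos (t * Y \<omega>) \<partial>M) = (\<integral>\<omega>. cos (0 * X \<omega> + t * Y \<omega>) \<partial>M)
      + ((\<integral>\<omega>. cos (s * X \<omega> + t * Y \<omega>) \<partial>M) + (\<integral>\<omega>. cos (s * X \<omega> + (-t) * Y \<omega>) \<partial>M)) / 2"
    and "(\<integral>\<omega>. (1 + cos (s * X \<omega>)) * sin (t * Y \<omega>) \<partial>M) = (\<integral>\<omega>. sin (0 * X \<omega> + t * Y \<omega>) \<partial>M)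
      + ((\<integral>\<omega>. sin (s * X \<omega> + t * Y \<omega>) \<partial>M) - (\<integral>\<omega>. sin (s * X \<omega> + (-t) * Y \<omega>) \<partial>M)) / 2"
    and "(\<integral>\<omega>. (1 + sin (s * X \<omega>)) * cos (t * Y \<omega>) \<partial>M) = (\<integral>\<omega>. cos (0 * X \<omega> + t * Y \<omega>) \<partial>M)
      + ((\<integral>\<omega>. sin (s * X \<omega> + t * Y \<omega>) \<partial>M) + (\<integral>\<omega>. sin (s * X \<omega> + (-t) * Y \<omega>) \<partial>M)) / 2"
    and "(\<integral>\<omega>. (1 + sin (s * X \<omega>)) * sin (t * Y \<omega>) \<partial>M) = (\<integral>\<omega>. sin (0 * X \<omega> + t * Y \<omega>) \<partial>M)
      + ((\<integral>\<omega>. cos (s * X \<omega> + (-t) * Y \<omega>) \<partial>M) - (\<integral>\<omega>. cos (s * X \<omega> + t * Y \<omega>) \<partial>M)) / 2"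
proof -
  have e1: "(1 + cos a) * cos b = cos (0 + b) + (cos (a + b) + cos (a + - b)) / 2" for a b :: real
    by (simp add: cos_add cos_diff algebra_simps)
  have e2: "(1 + cos a) * sin b = sin (0 + b) + (sin (a + b) - sin (a + - b)) / 2" for a b :: real
    by (simp add: sin_add sin_diff algebra_simps)
  have e3: "(1 + sin a) * cos b = cos (0 + b) + (sin (a + b) + sin (a + - b)) / 2" for a b :: real
    by (simp add: sin_add cos_add sin_diff cos_diff algebra_simps)
  have e4: "(1 + sin a) * sin b = sin (0 + b) + (cos (a + - b) - cos (a + b)) / 2" for a b :: real
    by (simp add: sin_add cos_add sin_diff cos_diff algebra_simps)
  show "(\<integral>\<omega>. (1 + cos (s * X \<omega>)) * cos (t * Y \<omega>) \<partial>M) = (\<integral>\<omega>. cos (0 * X \<omega> + t * Y \<omega>) \<partial>M)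
      + ((\<integral>\<omega>. cos (s * X \<omega> + t * Y \<omega>) \<partial>M) + (\<integral>\<omega>. cos (s * X \<omega> + (-t) * Y \<omega>) \<partial>M)) / 2"
    unfolding e1 using P by (simp add: Bochner_Integration.integral_add)
  show "(\<integral>\<omega>. (1 + cos (s * X \<omega>)) * sin (t * Y \<omega>) \<partial>M) = (\<integral>\<omega>. sin (0 * X \<omega> + t * Y \<omega>) \<partial>M)
      + ((\<integral>\<omega>. sin (s * X \<omega> + t * Y \<omega>) \<partial>M) - (\<integral>\<omega>. sin (s * X \<omega> + (-t) * Y \<omega>) \<partial>M)) / 2"
    unfolding e2 using P by (simp add: Bochner_Integration.integral_add Bochner_Integration.integral_diff)
  show "(\<integral>\<omega>. (1 + sin (s * X \<omega>)) * cos (t * Y \<omega>) \<partial>M) = (\<integral>\<omega>. cos (0 * X \<omega> + t * Y \<omega>) \<partial>M)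
      + ((\<integral>\<omega>. sin (s * X \<omega> + t * Y \<omega>) \<partial>M) + (\<integral>\<omega>. sin (s * X \<omega> + (-t) * Y \<omega>) \<partial>M)) / 2"
    unfolding e3 using P by (simp add: Bochner_Integration.integral_add)
  show "(\<integral>\<omega>. (1 + sin (s * X \<omega>)) * sin (t * Y \<omega>) \<partial>M) = (\<integral>\<omega>. sin (0 * X \<omega> + t * Y \<omega>) \<partial>M)
      + ((\<integral>\<omega>. cos (s * X \<omega> + (-t) * Y \<omega>) \<partial>M) - (\<integral>\<omega>. cos (s * X \<omega> + t * Y \<omega>) \<partial>M)) / 2"
    unfolding e4 using P by (simp add: Bochner_Integration.integral_add Bochner_Integration.integral_diff)
qed

lemma sin_bnds[simp]: "0 \<le> 1 + sin (x::real)" "1 + sin x \<le> 2" "0 \<le> 1 + cos x" "1 + cos x \<le> 2"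
  using sin_ge_minus_one[of x] sin_le_one[of x] cos_ge_minus_one[of x] cos_le_one[of x] by linarith+

lemma cramer_wold2:
  fixes M1 :: "'w measure" and M2 :: "'v measure" and X1 Y1 :: "'w \<Rightarrow> real" and X2 Y2 :: "'v \<Rightarrow> real"
  assumes P1: "prob_space M1" and P2: "prob_space M2"
    and mX1[measurable]: "X1 \<in> borel_measurable M1" and mY1[measurable]: "Y1 \<in> borel_measurable M1"
      and mX2[measurable]: "X2 \<in> borel_measurable M2" and mY2[measurable]: "Y2 \<in> borel_measurable M2"
    and hc: "\<And>s t. (\<integral>\<omega>. cos (s * X1 \<omega> + t * Y1 \<omega>) \<partial>M1) = (\<integral>\<omega>. cos (s * X2 \<omega> + t * Y2 \<omega>) \<partial>M2)"
    and hs: "\<And>s t. (\<integral>\<omega>. sin (s * X1 \<omega> + t * Y1 \<omega>) \<partial>M1) = (\<integral>\<omega>. sin (s * X2 \<omega> + t * Y2 \<omega>) \<partial>M2)"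
  shows "distr M1 (borel \<Otimes>\<^sub>M borel) (\<lambda>\<omega>. (X1 \<omega>, Y1 \<omega>)) = distr M2 (borel \<Otimes>\<^sub>M borel) (\<lambda>\<omega>. (X2 \<omega>, Y2 \<omega>))"
proof -
  interpret M1: prob_space M1 by fact
  interpret M2: prob_space M2 by fact
  have stepc: "(\<integral>\<omega>. (1 + cos (s * X1 \<omega>)) * indicator B (Y1 \<omega>) \<partial>M1) = (\<integral>\<omega>. (1 + cos (s * X2 \<omega>)) * indicator B (Y2 \<omega>) \<partial>M2)"
    if [measurable]: "B \<in> sets borel" for s B
    by (rule levy_weighted[OF P1 P2, where K=2]) (simp_all only: trig_ids[OF P1 mX1 mY1] trig_ids[OF P2 mX2 mY2] hc hs, auto simp: add_nonneg_nonneg intro: add_mono)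
  have steps: "(\<integral>\<omega>. (1 + sin (s * X1 \<omega>)) * indicator B (Y1 \<omega>) \<partial>M1) = (\<integral>\<omega>. (1 + sin (s * X2 \<omega>)) * indicator B (Y2 \<omega>) \<partial>M2)"
    if [measurable]: "B \<in> sets borel" for s B
    by (rule levy_weighted[OF P1 P2, where K=2]) (simp_all only: trig_ids[OF P1 mX1 mY1] trig_ids[OF P2 mX2 mY2] hc hs, auto simp: add_nonneg_nonneg intro: add_mono)
  have ind_eq: "(\<integral>\<omega>. indicator B (Y1 \<omega>) \<partial>M1) = (\<integral>\<omega>. (indicator B (Y2 \<omega>) :: real) \<partial>M2)"
    if [measurable]: "B \<in> sets borel" for B
    using stepc[OF that, of 0] by simp
  have split1: "(\<integral>\<omega>. (1 + f (X1 \<omega>)) * indicator B (Y1 \<omega>) \<partial>M1) = (\<integral>\<omega>. indicator B (Y1 \<omega>) \<partial>M1) + (\<integral>\<omega>. indicator B (Y1 \<omega>) * f (X1 \<omega>) \<partial>M1)"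
    if [measurable]: "B \<in> sets borel" "f \<in> borel_measurable borel" and fb: "\<And>x. \<bar>f x\<bar> \<le> 1" for B and f :: "real \<Rightarrow> real"
  proof -
    have "integrable M1 (\<lambda>\<omega>. indicator B (Y1 \<omega>) * f (X1 \<omega>))"
      by (rule int_bounded[where K=1, OF P1]) (auto simp: abs_mult fb split: split_indicator)
    moreover have "integrable M1 (\<lambda>\<omega>. indicator B (Y1 \<omega>) :: real)"
      by (rule int_bounded[where K=1, OF P1]) (auto split: split_indicator)
    moreover have "(\<lambda>\<omega>. (1 + f (X1 \<omega>)) * indicator B (Y1 \<omega>)) = (\<lambda>\<omega>. indicator B (Y1 \<omega>) + indicator B (Y1 \<omega>) * f (X1 \<omega>))"
      by (auto simp: algebra_simps)
    ultimately show ?thesis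
      by (simp only:) (rule Bochner_Integration.integral_add)
  qed
  have split2: "(\<integral>\<omega>. (1 + f (X2 \<omega>)) * indicator B (Y2 \<omega>) \<partial>M2) = (\<integral>\<omega>. indicator B (Y2 \<omega>) \<partial>M2) + (\<integral>\<omega>. indicator B (Y2 \<omega>) * f (X2 \<omega>) \<partial>M2)"
    if [measurable]: "B \<in> sets borel" "f \<in> borel_measurable borel" and fb: "\<And>x. \<bar>f x\<bar> \<le> 1" for B and f :: "real \<Rightarrow> real"
  proof -
    have "integrable M2 (\<lambda>\<omega>. indicator B (Y2 \<omega>) * f (X2 \<omega>))"
      by (rule int_bounded[where K=1, OF P2]) (auto simp: abs_mult fb split: split_indicator)
    moreover have "integrable M2 (\<lambda>\<omega>. indicator B (Y2 \<omega>) :: real)"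
      by (rule int_bounded[where K=1, OF P2]) (auto split: split_indicator)
    moreover have "(\<lambda>\<omega>. (1 + f (X2 \<omega>)) * indicator B (Y2 \<omega>)) = (\<lambda>\<omega>. indicator B (Y2 \<omega>) + indicator B (Y2 \<omega>) * f (X2 \<omega>))"
      by (auto simp: algebra_simps)
    ultimately show ?thesis
      by (simp only:) (rule Bochner_Integration.integral_add)
  qed
  have cB: "(\<integral>\<omega>. indicator B (Y1 \<omega>) * cos (t * X1 \<omega>) \<partial>M1) = (\<integral>\<omega>. indicator B (Y2 \<omega>) * cos (t * X2 \<omega>) \<partial>M2)"
    if [measurable]: "B \<in> sets borel" for B t
    using stepc[OF that, of t] split1[OF that, of "\<lambda>x. cos (t * x)"] split2[OF that, of "\<lambda>x. cos (t * x)"] ind_eq[OF that]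
    by simp
  have sB: "(\<integral>\<omega>. indicator B (Y1 \<omega>) * sin (t * X1 \<omega>) \<partial>M1) = (\<integral>\<omega>. indicator B (Y2 \<omega>) * sin (t * X2 \<omega>) \<partial>M2)"
    if [measurable]: "B \<in> sets borel" for B t
    using steps[OF that, of t] split1[OF that, of "\<lambda>x. sin (t * x)"] split2[OF that, of "\<lambda>x. sin (t * x)"] ind_eq[OF that]
    by simp
  have rect: "(\<integral>\<omega>. indicator B (Y1 \<omega>) * indicator A (X1 \<omega>) \<partial>M1) = (\<integral>\<omega>. (indicator B (Y2 \<omega>) * indicator A (X2 \<omega>) :: real) \<partial>M2)"
    if [measurable]: "A \<in> sets borel" "B \<in> sets borel" for A B
    by (rule levy_weighted[OF P1 P2, where K=1]) (auto simp: cB sB split: split_indicator)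
  let ?E = "{a \<times> b |a b. a \<in> sets (borel::real measure) \<and> b \<in> sets (borel::real measure)}"
  let ?P = "(borel::real measure) \<Otimes>\<^sub>M (borel::real measure)"
  show ?thesis
  proof (rule measure_eqI_generator_eq[OF Int_stable_pair_measure_generator[of borel borel], where \<Omega>="space ?P" and A="\<lambda>_. UNIV"])
    show "?E \<subseteq> Pow (space ?P)" by (auto simp: space_pair_measure)
    show "sets (distr M1 ?P (\<lambda>\<omega>. (X1 \<omega>, Y1 \<omega>))) = sigma_sets (space ?P) ?E"
      by (simp add: sets_pair_measure space_pair_measure)
    show "sets (distr M2 ?P (\<lambda>\<omega>. (X2 \<omega>, Y2 \<omega>))) = sigma_sets (space ?P) ?E"
      by (simp add: sets_pair_measure space_pair_measure)
    show "range (\<lambda>_. UNIV) \<subseteq> ?E" by (auto intro!: exI[of _ UNIV])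
    show "(\<Union>i. UNIV) = space ?P" by (simp add: space_pair_measure)
    show "emeasure (distr M1 ?P (\<lambda>\<omega>. (X1 \<omega>, Y1 \<omega>))) UNIV \<noteq> \<infinity>" for i :: nat
    proof -
      have "UNIV \<in> sets ?P" using sets.top[of ?P] by (simp add: space_pair_measure)
      then show ?thesis by (subst emeasure_distr) auto
    qed
  next
    fix E assume "E \<in> ?E"
    then obtain A B where E: "E = A \<times> B" and [measurable]: "A \<in> sets borel" "B \<in> sets borel" by auto
    have "emeasure (distr M1 ?P (\<lambda>\<omega>. (X1 \<omega>, Y1 \<omega>))) E = ennreal (\<integral>\<omega>. indicator B (Y1 \<omega>) * indicator A (X1 \<omega>) \<partial>M1)"
    proof -
      have "emeasure (distr M1 ?P (\<lambda>\<omega>. (X1 \<omega>, Y1 \<omega>))) E = emeasure M1 {\<omega> \<in> space M1. X1 \<omega> \<in> A \<and> Y1 \<omega> \<in> B}"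
        unfolding E by (subst emeasure_distr) (auto intro!: arg_cong[where f="emeasure M1"])
      also have "\<dots> = ennreal (\<integral>\<omega>. indicator {\<omega> \<in> space M1. X1 \<omega> \<in> A \<and> Y1 \<omega> \<in> B} \<omega> \<partial>M1)"
        by (simp add: M1.emeasure_eq_measure)
      also have "(\<integral>\<omega>. (indicator {\<omega> \<in> space M1. X1 \<omega> \<in> A \<and> Y1 \<omega> \<in> B} \<omega> :: real) \<partial>M1) = (\<integral>\<omega>. indicator B (Y1 \<omega>) * indicator A (X1 \<omega>) \<partial>M1)"
        by (rule Bochner_Integration.integral_cong) (auto split: split_indicator)
      finally show ?thesis .
    qed
    also have "\<dots> = ennreal (\<integral>\<omega>. indicator B (Y2 \<omega>) * indicator A (X2 \<omega>) \<partial>M2)"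
      by (simp add: rect)
    also have "\<dots> = emeasure (distr M2 ?P (\<lambda>\<omega>. (X2 \<omega>, Y2 \<omega>))) E"
    proof -
      have "emeasure (distr M2 ?P (\<lambda>\<omega>. (X2 \<omega>, Y2 \<omega>))) E = emeasure M2 {\<omega> \<in> space M2. X2 \<omega> \<in> A \<and> Y2 \<omega> \<in> B}"
        unfolding E by (subst emeasure_distr) (auto intro!: arg_cong[where f="emeasure M2"])
      also have "\<dots> = ennreal (\<integral>\<omega>. indicator {\<omega> \<in> space M2. X2 \<omega> \<in> A \<and> Y2 \<omega> \<in> B} \<omega> \<partial>M2)"
        by (simp add: M2.emeasure_eq_measure)
      also have "(\<integral>\<omega>. (indicator {\<omega> \<in> space M2. X2 \<omega> \<in> A \<and> Y2 \<omega> \<in> B} \<omega> :: real) \<partial>M2) = (\<integral>\<omega>. indicator B (Y2 \<omega>) * indicator A (X2 \<omega>) \<partial>M2)"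
        by (rule Bochner_Integration.integral_cong) (auto split: split_indicator)
      finally show ?thesis by simp
    qed
    finally show "emeasure (distr M1 ?P (\<lambda>\<omega>. (X1 \<omega>, Y1 \<omega>))) E = emeasure (distr M2 ?P (\<lambda>\<omega>. (X2 \<omega>, Y2 \<omega>))) E" .
  qed
qed

lemma char_std_normal_split:
  "(\<integral>x. cos (c * x) \<partial>std_normal_distribution) = exp (- c\<^sup>2 / 2)"
  "(\<integral>x. sin (c * x) \<partial>std_normal_distribution) = 0"
proof -
  have P: "prob_space std_normal_distribution" using real_dist_normal_dist
    by (simp add: real_distribution_def)
  have "char std_normal_distribution c = (\<integral>x. (1::real) *\<^sub>R iexp (c * x) \<partial>std_normal_distribution)"
    by (simp add: char_def)
  also have "\<dots> = complex_of_real (\<integral>x. 1 * cos (c * x) \<partial>std_normal_distribution) + \<i> * complex_of_real (\<integral>x. 1 * sin (c * x) \<partial>std_normal_distribution)"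
    by (rule iexp_integral_split[where K=1]) (use P in \<open>auto simp: prob_space_def\<close>)
  finally have "complex_of_real (exp (- c\<^sup>2 / 2)) = complex_of_real (\<integral>x. cos (c * x) \<partial>std_normal_distribution) + \<i> * complex_of_real (\<integral>x. sin (c * x) \<partial>std_normal_distribution)"
    by (simp add: char_std_normal_distribution)
  then show "(\<integral>x. cos (c * x) \<partial>std_normal_distribution) = exp (- c\<^sup>2 / 2)"
    "(\<integral>x. sin (c * x) \<partial>std_normal_distribution) = 0"
    by (simp_all add: complex_eq_iff)
qed

lemma normal_rv_facts:
  fixes M :: "'w measure" and W :: "'w \<Rightarrow> real"
  assumes P: "prob_space M" and N: "real_normal_rv M W"
  shows "integrable M W" "integrable M (\<lambda>\<omega>. (W \<omega>)\<^sup>2)"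
    "(\<integral>\<omega>. W \<omega> \<partial>M) = 0 \<Longrightarrow> (\<integral>\<omega>. cos (W \<omega>) \<partial>M) = exp (- (\<integral>\<omega>. (W \<omega>)\<^sup>2 \<partial>M) / 2)"
    "(\<integral>\<omega>. W \<omega> \<partial>M) = 0 \<Longrightarrow> (\<integral>\<omega>. sin (W \<omega>) \<partial>M) = 0"
proof -
  interpret prob_space M by fact
  have [measurable]: "W \<in> borel_measurable M" using N by (simp add: real_normal_rv_def)
  obtain \<mu> \<sigma> :: real where s0: "\<sigma> \<ge> 0" and
    D: "if \<sigma> = 0 then (AE \<omega> in M. W \<omega> = \<mu>) else distributed M lborel W (\<lambda>x. ennreal (normal_density \<mu> \<sigma> x))"
    using N by (auto simp: real_normal_rv_def)
  have "integrable M W \<and> integrable M (\<lambda>\<omega>. (W \<omega>)\<^sup>2) \<and>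
    ((\<integral>\<omega>. W \<omega> \<partial>M) = 0 \<longrightarrow> (\<integral>\<omega>. cos (W \<omega>) \<partial>M) = exp (- (\<integral>\<omega>. (W \<omega>)\<^sup>2 \<partial>M) / 2) \<and> (\<integral>\<omega>. sin (W \<omega>) \<partial>M) = 0)"
  proof (cases "\<sigma> = 0")
    case True
    then have AE: "AE \<omega> in M. W \<omega> = \<mu>" using D by simp
    have i1: "integrable M W" by (rule integrable_cong_AE_imp[where g="\<lambda>_. \<mu>"]) (use AE in auto)
    have i2: "integrable M (\<lambda>\<omega>. (W \<omega>)\<^sup>2)" by (rule integrable_cong_AE_imp[where g="\<lambda>_. \<mu>\<^sup>2"]) (use AE in auto)
    have e1: "(\<integral>\<omega>. W \<omega> \<partial>M) = \<mu>" using integral_cong_AE[of W M "\<lambda>_. \<mu>"] AE by (simp add: prob_space)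
    have e2: "(\<integral>\<omega>. (W \<omega>)\<^sup>2 \<partial>M) = \<mu>\<^sup>2"
    proof -
      have "AE x in M. (\<lambda>\<omega>. (W \<omega>)\<^sup>2) x = (\<lambda>_. \<mu>\<^sup>2) x" using AE by eventually_elim simp
      then show ?thesis using integral_cong_AE[of "\<lambda>\<omega>. (W \<omega>)\<^sup>2" M "\<lambda>_. \<mu>\<^sup>2"] by (simp add: prob_space)
    qed
    have e3: "(\<integral>\<omega>. cos (W \<omega>) \<partial>M) = cos \<mu>"
    proof -
      have "AE x in M. (\<lambda>\<omega>. cos (W \<omega>)) x = (\<lambda>_. cos \<mu>) x" using AE by eventually_elim simp
      then show ?thesis using integral_cong_AE[of "\<lambda>\<omega>. cos (W \<omega>)" M "\<lambda>_. cos \<mu>"] by (simp add: prob_space)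
    qed
    have e4: "(\<integral>\<omega>. sin (W \<omega>) \<partial>M) = sin \<mu>"
    proof -
      have "AE x in M. (\<lambda>\<omega>. sin (W \<omega>)) x = (\<lambda>_. sin \<mu>) x" using AE by eventually_elim simp
      then show ?thesis using integral_cong_AE[of "\<lambda>\<omega>. sin (W \<omega>)" M "\<lambda>_. sin \<mu>"] by (simp add: prob_space)
    qed
    show ?thesis using i1 i2 e1 e2 e3 e4 by simp
  next
    case False
    with s0 have sp: "\<sigma> > 0" by simp
    have D: "distributed M lborel W (\<lambda>x. ennreal (normal_density \<mu> \<sigma> x))" using D False by simp
    have i1: "integrable M W"
      using distributed_integrable[OF D, of "\<lambda>x. x"] integrable_normal_moment_nz_1[of \<sigma> \<mu>] sp by simp
    have i2: "integrable M (\<lambda>\<omega>. (W \<omega> - \<mu>)^2)"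
      using distributed_integrable[OF D, of "\<lambda>x. (x - \<mu>)^2"] integrable_normal_moment[of \<sigma> \<mu> 2] sp by simp
    have mu: "(\<integral>\<omega>. W \<omega> \<partial>M) = \<mu>" using normal_distributed_expectation[OF sp D] .
    have var: "(\<integral>\<omega>. (W \<omega> - \<mu>)^2 \<partial>M) = \<sigma>\<^sup>2" using normal_distributed_variance[OF sp D] mu by simp
    have i2': "integrable M (\<lambda>\<omega>. (W \<omega>)\<^sup>2)"
    proof -
      have "integrable M (\<lambda>\<omega>. (W \<omega> - \<mu>)^2 + 2 * \<mu> * W \<omega> - \<mu>\<^sup>2)" using i1 i2 by auto
      then show ?thesis by (simp add: power2_eq_square algebra_simps)
    qed
    have rest: "(\<integral>\<omega>. cos (W \<omega>) \<partial>M) = exp (- (\<integral>\<omega>. (W \<omega>)\<^sup>2 \<partial>M) / 2) \<and> (\<integral>\<omega>. sin (W \<omega>) \<partial>M) = 0"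
      if m0: "(\<integral>\<omega>. W \<omega> \<partial>M) = 0"
    proof -
      have mu0: "\<mu> = 0" using mu m0 by simp
      have D': "distributed M lborel (\<lambda>\<omega>. (W \<omega> - \<mu>) / \<sigma>) (\<lambda>x. ennreal (std_normal_density x))"
        using normal_standard_normal_convert[OF sp, of W \<mu>] D by simp
      then have dd: "distr M lborel (\<lambda>\<omega>. W \<omega> / \<sigma>) = std_normal_distribution"
        by (simp add: distributed_def mu0)
      have "(\<integral>x. cos (\<sigma> * x) \<partial>std_normal_distribution) = (\<integral>\<omega>. cos (\<sigma> * (W \<omega> / \<sigma>)) \<partial>M)"
        unfolding dd[symmetric] by (rule integral_distr) auto
      then have c: "(\<integral>\<omega>. cos (W \<omega>) \<partial>M) = exp (- \<sigma>\<^sup>2 / 2)" using sp by (simp add: char_std_normal_split)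
      have "(\<integral>x. sin (\<sigma> * x) \<partial>std_normal_distribution) = (\<integral>\<omega>. sin (\<sigma> * (W \<omega> / \<sigma>)) \<partial>M)"
        unfolding dd[symmetric] by (rule integral_distr) auto
      then have sn: "(\<integral>\<omega>. sin (W \<omega>) \<partial>M) = 0" using sp by (simp add: char_std_normal_split)
      show ?thesis using c sn var mu0 by simp
    qed
    show ?thesis using i1 i2' rest by blast
  qed
  then show "integrable M W" "integrable M (\<lambda>\<omega>. (W \<omega>)\<^sup>2)"
    "(\<integral>\<omega>. W \<omega> \<partial>M) = 0 \<Longrightarrow> (\<integral>\<omega>. cos (W \<omega>) \<partial>M) = exp (- (\<integral>\<omega>. (W \<omega>)\<^sup>2 \<partial>M) / 2)"
    "(\<integral>\<omega>. W \<omega> \<partial>M) = 0 \<Longrightarrow> (\<integral>\<omega>. sin (W \<omega>) \<partial>M) = 0" by auto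
qed

abbreviation NN :: "(real \<times> real) measure" where
  "NN \<equiv> std_normal_distribution \<Otimes>\<^sub>M std_normal_distribution"

lemma prob_N: "prob_space std_normal_distribution"
  using real_dist_normal_dist by (simp add: real_distribution_def)

lemma pps_N: "pair_prob_space std_normal_distribution std_normal_distribution"
  by (simp add: pair_prob_space_def pair_sigma_finite_def prob_N prob_space_imp_sigma_finite)

lemma prob_NN: "prob_space NN"
proof -
  interpret pair_prob_space std_normal_distribution std_normal_distribution by (rule pps_N)
  show ?thesis by (rule P.prob_space_axioms)
qed

lemma NN_prod_int:
  fixes f g :: "real \<Rightarrow> real"
  assumes [measurable]: "f \<in> borel_measurable borel" "g \<in> borel_measurable borel"
    and fb: "\<And>x. \<bar>f x\<bar> \<le> 1" and gb: "\<And>x. \<bar>g x\<bar> \<le> 1"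
  shows "(\<integral>z. f (fst z) * g (snd z) \<partial>NN) = (\<integral>x. f x \<partial>std_normal_distribution) * (\<integral>x. g x \<partial>std_normal_distribution)"
proof -
  interpret pair_prob_space std_normal_distribution std_normal_distribution by (rule pps_N)
  have "integrable NN (\<lambda>(u, v). f u * g v)"
    by (rule int_bounded[where K=1, OF prob_NN]) (auto simp: abs_mult intro!: mult_le_one fb gb)
  then have "(\<integral>u. (\<integral>v. f u * g v \<partial>std_normal_distribution) \<partial>std_normal_distribution) = (\<integral>z. (\<lambda>(u, v). f u * g v) z \<partial>NN)"
    by (rule integral_fst)
  moreover have "(\<lambda>z. (\<lambda>(u, v). f u * g v) z) = (\<lambda>z. f (fst z) * g (snd z))" by auto
  ultimately show ?thesis by simp
qed

lemma NN_cos_sin: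
  "(\<integral>z. cos (\<alpha> * fst z + \<beta> * snd z) \<partial>NN) = exp (- (\<alpha>\<^sup>2 + \<beta>\<^sup>2) / 2)"
  "(\<integral>z. sin (\<alpha> * fst z + \<beta> * snd z) \<partial>NN) = 0"
proof -
  have b: "\<bar>cos x\<bar> \<le> 1" "\<bar>sin x\<bar> \<le> 1" for x :: real by auto
  have i1: "integrable NN (\<lambda>z. cos (\<alpha> * fst z) * cos (\<beta> * snd z))"
    by (rule int_bounded[where K=1, OF prob_NN]) (auto simp: abs_mult intro: mult_le_one)
  have i2: "integrable NN (\<lambda>z. sin (\<alpha> * fst z) * sin (\<beta> * snd z))"
    by (rule int_bounded[where K=1, OF prob_NN]) (auto simp: abs_mult intro: mult_le_one)
  have i3: "integrable NN (\<lambda>z. sin (\<alpha> * fst z) * cos (\<beta> * snd z))"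
    by (rule int_bounded[where K=1, OF prob_NN]) (auto simp: abs_mult intro: mult_le_one)
  have i4: "integrable NN (\<lambda>z. cos (\<alpha> * fst z) * sin (\<beta> * snd z))"
    by (rule int_bounded[where K=1, OF prob_NN]) (auto simp: abs_mult intro: mult_le_one)
  have "(\<integral>z. cos (\<alpha> * fst z + \<beta> * snd z) \<partial>NN) = (\<integral>z. cos (\<alpha> * fst z) * cos (\<beta> * snd z) - sin (\<alpha> * fst z) * sin (\<beta> * snd z) \<partial>NN)"
    by (simp add: cos_add)
  also have "\<dots> = (\<integral>z. cos (\<alpha> * fst z) * cos (\<beta> * snd z) \<partial>NN) - (\<integral>z. sin (\<alpha> * fst z) * sin (\<beta> * snd z) \<partial>NN)"
    by (rule Bochner_Integration.integral_diff[OF i1 i2])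
  also have "\<dots> = exp (- (\<alpha>\<^sup>2 + \<beta>\<^sup>2) / 2)"
    using NN_prod_int[of "\<lambda>x. cos (\<alpha> * x)" "\<lambda>x. cos (\<beta> * x)"] NN_prod_int[of "\<lambda>x. sin (\<alpha> * x)" "\<lambda>x. sin (\<beta> * x)"]
    by (simp add: char_std_normal_split, simp add: mult_exp_exp field_simps)
  finally show "(\<integral>z. cos (\<alpha> * fst z + \<beta> * snd z) \<partial>NN) = exp (- (\<alpha>\<^sup>2 + \<beta>\<^sup>2) / 2)" .
  have "(\<integral>z. sin (\<alpha> * fst z + \<beta> * snd z) \<partial>NN) = (\<integral>z. sin (\<alpha> * fst z) * cos (\<beta> * snd z) + cos (\<alpha> * fst z) * sin (\<beta> * snd z) \<partial>NN)"
    by (simp add: sin_add)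
  also have "\<dots> = (\<integral>z. sin (\<alpha> * fst z) * cos (\<beta> * snd z) \<partial>NN) + (\<integral>z. cos (\<alpha> * fst z) * sin (\<beta> * snd z) \<partial>NN)"
    by (rule Bochner_Integration.integral_add[OF i3 i4])
  also have "\<dots> = 0"
    using NN_prod_int[of "\<lambda>x. sin (\<alpha> * x)" "\<lambda>x. cos (\<beta> * x)"] NN_prod_int[of "\<lambda>x. cos (\<alpha> * x)" "\<lambda>x. sin (\<beta> * x)"]
    by (simp add: char_std_normal_split)
  finally show "(\<integral>z. sin (\<alpha> * fst z + \<beta> * snd z) \<partial>NN) = 0" .
qed

lemma pair_law:
  fixes M :: "'w measure" and X Y :: "'w \<Rightarrow> real" and \<rho> :: real
  assumes P: "prob_space M"
    and lin: "\<And>s t. real_normal_rv M (\<lambda>\<omega>. s * X \<omega> + t * Y \<omega>)"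
    and m0: "(\<integral>\<omega>. X \<omega> \<partial>M) = 0" "(\<integral>\<omega>. Y \<omega> \<partial>M) = 0"
    and v1: "(\<integral>\<omega>. X \<omega> * X \<omega> \<partial>M) = 1" "(\<integral>\<omega>. Y \<omega> * Y \<omega> \<partial>M) = 1"
    and c: "(\<integral>\<omega>. X \<omega> * Y \<omega> \<partial>M) = \<rho>"
  shows "-1 \<le> \<rho> \<and> \<rho> \<le> 1 \<and> distr M (borel \<Otimes>\<^sub>M borel) (\<lambda>\<omega>. (X \<omega>, Y \<omega>)) =
    distr NN (borel \<Otimes>\<^sub>M borel) (\<lambda>z. (sqrt ((1+\<rho>)/2) * fst z + sqrt ((1-\<rho>)/2) * snd z, sqrt ((1+\<rho>)/2) * fst z - sqrt ((1-\<rho>)/2) * snd z))"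
proof -
  interpret prob_space M by fact
  have nX: "real_normal_rv M X" using lin[of 1 0] by simp
  have nY: "real_normal_rv M Y" using lin[of 0 1] by simp
  have nXY: "real_normal_rv M (\<lambda>\<omega>. X \<omega> + Y \<omega>)" using lin[of 1 1] by simp
  have [measurable]: "X \<in> borel_measurable M" "Y \<in> borel_measurable M"
    using nX nY by (auto simp: real_normal_rv_def)
  have iX: "integrable M X" and iX2: "integrable M (\<lambda>\<omega>. X \<omega> * X \<omega>)"
    using normal_rv_facts(1,2)[OF P nX] by (auto simp: power2_eq_square)
  have iY: "integrable M Y" and iY2: "integrable M (\<lambda>\<omega>. Y \<omega> * Y \<omega>)"
    using normal_rv_facts(1,2)[OF P nY] by (auto simp: power2_eq_square)
  have iS: "integrable M (\<lambda>\<omega>. (X \<omega> + Y \<omega>) * (X \<omega> + Y \<omega>))"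
    using normal_rv_facts(2)[OF P nXY] by (auto simp: power2_eq_square)
  have iXY: "integrable M (\<lambda>\<omega>. X \<omega> * Y \<omega>)"
  proof -
    have "integrable M (\<lambda>\<omega>. ((X \<omega> + Y \<omega>) * (X \<omega> + Y \<omega>) - X \<omega> * X \<omega> - Y \<omega> * Y \<omega>) / 2)"
      using iS iX2 iY2 by auto
    then show ?thesis by (simp add: algebra_simps)
  qed
  have sq: "(\<integral>\<omega>. (s * X \<omega> + t * Y \<omega>)\<^sup>2 \<partial>M) = s\<^sup>2 + 2 * s * t * \<rho> + t\<^sup>2" for s t
  proof -
    have "(\<lambda>\<omega>. (s * X \<omega> + t * Y \<omega>)\<^sup>2) = (\<lambda>\<omega>. s\<^sup>2 * (X \<omega> * X \<omega>) + (2 * s * t) * (X \<omega> * Y \<omega>) + t\<^sup>2 * (Y \<omega> * Y \<omega>))"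
      by (auto simp: power2_eq_square algebra_simps)
    then show ?thesis using iX2 iY2 iXY v1 c by simp
  qed
  have mean: "(\<integral>\<omega>. s * X \<omega> + t * Y \<omega> \<partial>M) = 0" for s t
    using iX iY m0 by simp
  have hc1: "(\<integral>\<omega>. cos (s * X \<omega> + t * Y \<omega>) \<partial>M) = exp (- (s\<^sup>2 + 2 * s * t * \<rho> + t\<^sup>2) / 2)" for s t
    using normal_rv_facts(3)[OF P lin mean] sq by simp
  have hs1: "(\<integral>\<omega>. sin (s * X \<omega> + t * Y \<omega>) \<partial>M) = 0" for s t
    using normal_rv_facts(4)[OF P lin mean] by simp
  have "0 \<le> (\<integral>\<omega>. (1 * X \<omega> + (-1) * Y \<omega>)\<^sup>2 \<partial>M)" by simp
  then have r1: "\<rho> \<le> 1" unfolding sq by simp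
  have "0 \<le> (\<integral>\<omega>. (1 * X \<omega> + 1 * Y \<omega>)\<^sup>2 \<partial>M)" by simp
  then have r2: "-1 \<le> \<rho>" unfolding sq by simp
  define a where "a = sqrt ((1+\<rho>)/2)"
  define b where "b = sqrt ((1-\<rho>)/2)"
  have a2: "a\<^sup>2 = (1+\<rho>)/2" unfolding a_def using r2 by simp
  have b2: "b\<^sup>2 = (1-\<rho>)/2" unfolding b_def using r1 by simp
  have hc2: "(\<integral>z. cos (s * (a * fst z + b * snd z) + t * (a * fst z - b * snd z)) \<partial>NN) = exp (- (s\<^sup>2 + 2 * s * t * \<rho> + t\<^sup>2) / 2)" for s t
  proof -
    have "(\<lambda>z. cos (s * (a * fst z + b * snd z) + t * (a * fst z - b * snd z))) = (\<lambda>z. cos (((s+t)*a) * fst z + ((s-t)*b) * snd z))"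
      by (auto simp: algebra_simps)
    moreover have "((s+t)*a)\<^sup>2 + ((s-t)*b)\<^sup>2 = s\<^sup>2 + 2 * s * t * \<rho> + t\<^sup>2"
      by (simp add: power_mult_distrib a2 b2) (simp add: power2_eq_square field_simps)
    ultimately show ?thesis by (simp add: NN_cos_sin)
  qed
  have hs2: "(\<integral>z. sin (s * (a * fst z + b * snd z) + t * (a * fst z - b * snd z)) \<partial>NN) = 0" for s t
  proof -
    have "(\<lambda>z. sin (s * (a * fst z + b * snd z) + t * (a * fst z - b * snd z))) = (\<lambda>z. sin (((s+t)*a) * fst z + ((s-t)*b) * snd z))"
      by (auto simp: algebra_simps)
    then show ?thesis by (simp add: NN_cos_sin)
  qed
  have "distr M (borel \<Otimes>\<^sub>M borel) (\<lambda>\<omega>. (X \<omega>, Y \<omega>)) =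
    distr NN (borel \<Otimes>\<^sub>M borel) (\<lambda>z. (a * fst z + b * snd z, a * fst z - b * snd z))"
    by (rule cramer_wold2[OF P prob_NN]) (auto simp: hc1 hc2 hs1 hs2)
  then show ?thesis using r1 r2 by (simp add: a_def b_def)
qed

abbreviation "\<phi> \<equiv> std_normal_density"

lemma phi_eq: "\<phi> x = exp (- x\<^sup>2 / 2) / sqrt (2 * pi)"
  by (simp add: std_normal_density_def)

lemma phi_even: "\<phi> (- x) = \<phi> x" by (simp add: phi_eq)

lemma NN_density: "NN = density (lborel \<Otimes>\<^sub>M lborel) (\<lambda>(x,y). ennreal (\<phi> x) * ennreal (\<phi> y))"
  by (rule pair_measure_density) (auto intro: prob_space_imp_sigma_finite prob_N lborel.sigma_finite_measure_axioms)

lemma NN_iter: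
  fixes f :: "real \<times> real \<Rightarrow> ennreal"
  assumes [measurable]: "f \<in> borel_measurable (borel \<Otimes>\<^sub>M borel)"
  shows "(\<integral>\<^sup>+z. f z \<partial>NN) = (\<integral>\<^sup>+u. \<integral>\<^sup>+v. ennreal (\<phi> u) * ennreal (\<phi> v) * f (u, v) \<partial>lborel \<partial>lborel)"
    and "(\<integral>\<^sup>+z. f z \<partial>NN) = (\<integral>\<^sup>+v. \<integral>\<^sup>+u. ennreal (\<phi> u) * ennreal (\<phi> v) * f (u, v) \<partial>lborel \<partial>lborel)"
proof -
  have m: "(\<lambda>z. (case z of (x, y) \<Rightarrow> ennreal (\<phi> x) * ennreal (\<phi> y)) * f z) \<in> borel_measurable (lborel \<Otimes>\<^sub>M lborel)"
    by measurable
  have "(\<integral>\<^sup>+z. f z \<partial>NN) = (\<integral>\<^sup>+z. (case z of (x, y) \<Rightarrow> ennreal (\<phi> x) * ennreal (\<phi> y)) * f z \<partial>(lborel \<Otimes>\<^sub>M lborel))"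
    by (subst NN_density) (rule nn_integral_density, measurable)
  note eq = this
  show "(\<integral>\<^sup>+z. f z \<partial>NN) = (\<integral>\<^sup>+u. \<integral>\<^sup>+v. ennreal (\<phi> u) * ennreal (\<phi> v) * f (u, v) \<partial>lborel \<partial>lborel)"
    unfolding eq lborel.nn_integral_fst[OF m, symmetric] by simp
  show "(\<integral>\<^sup>+z. f z \<partial>NN) = (\<integral>\<^sup>+v. \<integral>\<^sup>+u. ennreal (\<phi> u) * ennreal (\<phi> v) * f (u, v) \<partial>lborel \<partial>lborel)"
    unfolding eq lborel_pair.nn_integral_snd[OF m, symmetric] by simp
qed

lemma exp_neg_sq_lim:
  assumes "\<beta> > 0"
  shows "((\<lambda>x::real. exp (- (\<beta> * x\<^sup>2))) \<longlongrightarrow> 0) at_top"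
proof -
  have "filterlim (\<lambda>x::real. \<beta> * x\<^sup>2) at_top at_top"
    by (rule filterlim_tendsto_pos_mult_at_top[OF tendsto_const assms])
       (auto intro: filterlim_pow_at_top filterlim_ident)
  then have "filterlim (\<lambda>x::real. - (\<beta> * x\<^sup>2)) at_bot at_top"
    by (simp add: filterlim_uminus_at_top)
  then show ?thesis by (rule filterlim_compose[OF exp_at_bot])
qed

lemma G1:
  assumes b: "\<beta> > 0"
  shows "(\<integral>\<^sup>+v. ennreal (v * exp (- (\<beta> * v\<^sup>2))) * indicator {0..} v \<partial>lborel) = ennreal (1 / (2 * \<beta>))"
proof -
  have "(\<integral>\<^sup>+v. ennreal (v * exp (- (\<beta> * v\<^sup>2))) * indicator {0..} v \<partial>lborel) = ennreal (0 - (- exp (- (\<beta> * 0\<^sup>2)) / (2 * \<beta>)))"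
  proof (rule nn_integral_FTC_atLeast)
    show "((\<lambda>x. - exp (- (\<beta> * x\<^sup>2)) / (2 * \<beta>)) \<longlongrightarrow> 0) at_top"
      using tendsto_divide[OF tendsto_minus[OF exp_neg_sq_lim[OF b]] tendsto_const[of "2 * \<beta>"]] b by simp
    show "DERIV (\<lambda>x. - exp (- (\<beta> * x\<^sup>2)) / (2 * \<beta>)) x :> x * exp (- (\<beta> * x\<^sup>2))" for x
      using b by (auto intro!: derivative_eq_intros simp: field_simps power2_eq_square)
  qed (auto intro: mult_nonneg_nonneg)
  then show ?thesis by simp
qed

lemma G0:
  assumes b: "\<beta> > 0"
  shows "(\<integral>\<^sup>+v. ennreal (exp (- (\<beta> * v\<^sup>2))) * indicator {0..} v \<partial>lborel) = ennreal (sqrt pi / (2 * sqrt \<beta>))"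
proof -
  have hb: "has_bochner_integral lborel (\<lambda>x. indicator {0..} x *\<^sub>R exp (- x\<^sup>2)) (sqrt pi / 2)"
    by (rule gaussian_moment_0)
  have "(\<integral>\<^sup>+x. ennreal (indicator {0..} x *\<^sub>R exp (- x\<^sup>2)) \<partial>lborel) = ennreal (sqrt pi / 2)"
    using hb by (subst nn_integral_eq_integral) (auto simp: has_bochner_integral_iff)
  then have I: "(\<integral>\<^sup>+x. ennreal (exp (- x\<^sup>2)) * indicator {0..} x \<partial>lborel) = ennreal (sqrt pi / 2)"
    by (simp add: indicator_mult_ennreal mult.commute)
  have sb: "sqrt \<beta> > 0" using b by simp
  have "(\<integral>\<^sup>+x. ennreal (exp (- x\<^sup>2)) * indicator {0..} x \<partial>lborel) =
      ennreal \<bar>sqrt \<beta>\<bar> * (\<integral>\<^sup>+v. ennreal (exp (- (0 + sqrt \<beta> * v)\<^sup>2)) * indicator {0..} (0 + sqrt \<beta> * v) \<partial>lborel)"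
    by (rule nn_integral_real_affine) (use sb in auto)
  also have "(\<integral>\<^sup>+v. ennreal (exp (- (0 + sqrt \<beta> * v)\<^sup>2)) * indicator {0..} (0 + sqrt \<beta> * v) \<partial>lborel) =
      (\<integral>\<^sup>+v. ennreal (exp (- (\<beta> * v\<^sup>2))) * indicator {0..} v \<partial>lborel)"
    using b sb by (intro nn_integral_cong) (auto simp: power_mult_distrib zero_le_mult_iff split: split_indicator)
  finally have "ennreal (sqrt \<beta>) * (\<integral>\<^sup>+v. ennreal (exp (- (\<beta> * v\<^sup>2))) * indicator {0..} v \<partial>lborel) = ennreal (sqrt pi / 2)"
    using I sb by simp
  then have "ennreal (1 / sqrt \<beta>) * (ennreal (sqrt \<beta>) * (\<integral>\<^sup>+v. ennreal (exp (- (\<beta> * v\<^sup>2))) * indicator {0..} v \<partial>lborel)) = ennreal (1 / sqrt \<beta>) * ennreal (sqrt pi / 2)"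
    by simp
  moreover have "ennreal (1 / sqrt \<beta>) * ennreal (sqrt \<beta>) = 1"
    using sb by (simp add: ennreal_mult[symmetric])
  moreover have "ennreal (1 / sqrt \<beta>) * ennreal (sqrt pi / 2) = ennreal (sqrt pi / (2 * sqrt \<beta>))"
    using sb by (simp add: ennreal_mult[symmetric])
  ultimately show ?thesis
    by (simp only: mult.assoc[symmetric] mult_1)
qed

lemma phi_deriv: "DERIV (\<lambda>x. - \<phi> x) x :> \<phi> x * x"
proof -
  have "DERIV (\<lambda>x. - (exp (- x\<^sup>2 / 2) / sqrt (2 * pi))) x :> exp (- x\<^sup>2 / 2) / sqrt (2 * pi) * x"
    by (auto intro!: derivative_eq_intros simp: field_simps power2_eq_square)
  then show ?thesis by (simp add: phi_eq)
qed

lemma phi_lim: "((\<lambda>x. - \<phi> x) \<longlongrightarrow> 0) at_top"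
proof -
  have "((\<lambda>x. - (exp (- ((1/2) * x\<^sup>2)) / sqrt (2 * pi))) \<longlongrightarrow> - (0 / sqrt (2 * pi))) at_top"
    by (intro tendsto_minus tendsto_divide exp_neg_sq_lim tendsto_const) auto
  then show ?thesis by (simp add: phi_eq)
qed

lemma phi_nonneg: "0 \<le> \<phi> x" by simp

lemma T1:
  assumes m: "m \<ge> 0"
  shows "(\<integral>\<^sup>+u. ennreal (\<phi> u * u) * indicator {m..} u \<partial>lborel) = ennreal (\<phi> m)"
proof -
  have "(\<integral>\<^sup>+u. ennreal (\<phi> u * u) * indicator {m..} u \<partial>lborel) = ennreal (0 - (- \<phi> m))"
    by (rule nn_integral_FTC_atLeast[OF _ phi_deriv _ phi_lim]) (use m in auto)
  then show ?thesis by simp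
qed

lemma EVEN:
  fixes g :: "real \<Rightarrow> ennreal"
  assumes [measurable]: "g \<in> borel_measurable borel" and ev: "\<And>v. g (- v) = g v"
  shows "(\<integral>\<^sup>+v. g v \<partial>lborel) = 2 * (\<integral>\<^sup>+v. g v * indicator {0..} v \<partial>lborel)"
proof -
  have "(\<integral>\<^sup>+v. g v \<partial>lborel) = (\<integral>\<^sup>+v. g v * indicator {0..} v + g v * indicator {..<0} v \<partial>lborel)"
    by (intro nn_integral_cong) (auto split: split_indicator)
  also have "\<dots> = (\<integral>\<^sup>+v. g v * indicator {0..} v \<partial>lborel) + (\<integral>\<^sup>+v. g v * indicator {..<0} v \<partial>lborel)"
    by (rule nn_integral_add) auto
  also have "(\<integral>\<^sup>+v. g v * indicator {..<0} v \<partial>lborel) = ennreal \<bar>-1\<bar> * (\<integral>\<^sup>+v. g (0 + -1 * v) * indicator {..<0} (0 + -1 * v) \<partial>lborel)"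
    by (rule nn_integral_real_affine) auto
  also have "\<dots> = (\<integral>\<^sup>+v. g v * indicator {0..} v \<partial>lborel)"
    by (simp, intro nn_integral_cong_AE, use AE_lborel_singleton[of 0] in eventually_elim)
       (auto simp: ev split: split_indicator)
  finally show ?thesis by (simp add: mult_2)
qed

lemma T2:
  assumes m: "m \<ge> 0"
  shows "(\<integral>\<^sup>+u. ennreal (\<phi> u * u\<^sup>2) * indicator {m..} u \<partial>lborel) = ennreal (m * \<phi> m) + (\<integral>\<^sup>+u. ennreal (\<phi> u) * indicator {m..} u \<partial>lborel)"
proof -
  have "(\<integral>\<^sup>+u. ennreal (\<phi> u) * indicator {m..} u \<partial>lborel) = (\<integral>\<^sup>+u. (\<integral>\<^sup>+t. ennreal (\<phi> t * t) * indicator {u..} t \<partial>lborel) * indicator {m..} u \<partial>lborel)"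
    using m by (intro nn_integral_cong) (auto simp: T1 split: split_indicator)
  also have "\<dots> = (\<integral>\<^sup>+u. \<integral>\<^sup>+t. ennreal (\<phi> t * t) * indicator {u..} t * indicator {m..} u \<partial>lborel \<partial>lborel)"
    by (intro nn_integral_cong) (simp add: nn_integral_multc)
  also have "\<dots> = (\<integral>\<^sup>+t. \<integral>\<^sup>+u. ennreal (\<phi> t * t) * indicator {u..} t * indicator {m..} u \<partial>lborel \<partial>lborel)"
  proof -
    have e: "(\<lambda>(t, u). ennreal (\<phi> t * t) * indicator {u..} t * indicator {m..} u) =
      (\<lambda>x::real \<times> real. ennreal (\<phi> (fst x) * fst x) * indicator {x. snd x \<le> fst x} x * indicator {m..} (snd x))"
      by (auto simp: fun_eq_iff split: split_indicator)
    have [measurable]: "{x::real \<times> real. snd x \<le> fst x} \<in> sets (borel \<Otimes>\<^sub>M borel)"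
      unfolding borel_prod by (rule borel_closed) (intro closed_Collect_le continuous_intros)
    have mm: "(\<lambda>x::real \<times> real. ennreal (\<phi> (fst x) * fst x) * indicator {x. snd x \<le> fst x} x * indicator {m..} (snd x)) \<in> borel_measurable (borel \<Otimes>\<^sub>M borel)"
      by measurable
    have "(\<lambda>(t, u). ennreal (\<phi> t * t) * indicator {u..} t * indicator {m..} u) \<in> borel_measurable (lborel \<Otimes>\<^sub>M lborel)"
      unfolding e using mm by (simp add: measurable_cong_sets[OF sets_pair_measure_cong[OF sets_lborel sets_lborel] refl])
    from lborel_pair.Fubini'[OF this] show ?thesis by simp
  qed
  also have "\<dots> = (\<integral>\<^sup>+t. ennreal (\<phi> t * t * (t - m)) * indicator {m..} t \<partial>lborel)"
  proof (intro nn_integral_cong)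
    fix t :: real
    have "(\<integral>\<^sup>+u. ennreal (\<phi> t * t) * indicator {u..} t * indicator {m..} u \<partial>lborel) = (\<integral>\<^sup>+u. ennreal (\<phi> t * t) * indicator {m..t} u \<partial>lborel)"
      by (intro nn_integral_cong) (auto split: split_indicator)
    also have "\<dots> = ennreal (\<phi> t * t) * emeasure lborel {m..t}"
      by (rule nn_integral_cmult_indicator) simp
    also have "\<dots> = ennreal (\<phi> t * t * (t - m)) * indicator {m..} t"
      using m by (auto simp: ennreal_mult[symmetric] split: split_indicator)
    finally show "(\<integral>\<^sup>+u. ennreal (\<phi> t * t) * indicator {u..} t * indicator {m..} u \<partial>lborel) = ennreal (\<phi> t * t * (t - m)) * indicator {m..} t" .
  qed
  finally have A: "(\<integral>\<^sup>+u. ennreal (\<phi> u) * indicator {m..} u \<partial>lborel) = (\<integral>\<^sup>+t. ennreal (\<phi> t * t * (t - m)) * indicator {m..} t \<partial>lborel)" .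
  have "(\<integral>\<^sup>+u. ennreal (\<phi> u * u\<^sup>2) * indicator {m..} u \<partial>lborel) =
      (\<integral>\<^sup>+u. ennreal (\<phi> u * u * (u - m)) * indicator {m..} u + ennreal m * (ennreal (\<phi> u * u) * indicator {m..} u) \<partial>lborel)"
  proof (intro nn_integral_cong)
    fix u :: real
    show "ennreal (\<phi> u * u\<^sup>2) * indicator {m..} u = ennreal (\<phi> u * u * (u - m)) * indicator {m..} u + ennreal m * (ennreal (\<phi> u * u) * indicator {m..} u)"
    proof (cases "m \<le> u")
      case True
      have "ennreal (\<phi> u * u\<^sup>2) = ennreal (\<phi> u * u * (u - m)) + ennreal (m * (\<phi> u * u))"
        using True m by (subst ennreal_plus[symmetric]) (auto simp: power2_eq_square algebra_simps intro!: mult_right_mono)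
      then show ?thesis using True m by (simp add: ennreal_mult)
    qed simp
  qed
  also have "\<dots> = (\<integral>\<^sup>+u. ennreal (\<phi> u * u * (u - m)) * indicator {m..} u \<partial>lborel) + ennreal m * (\<integral>\<^sup>+u. ennreal (\<phi> u * u) * indicator {m..} u \<partial>lborel)"
    by (simp add: nn_integral_add nn_integral_cmult)
  finally show ?thesis using m by (simp add: A T1 ennreal_mult[symmetric] add.commute)
qed

lemma phi_mono: "0 \<le> v \<Longrightarrow> v \<le> L \<Longrightarrow> \<phi> L \<le> \<phi> v"
  by (simp add: phi_eq divide_right_mono power_mono)

lemma T3:
  assumes L: "L \<ge> 0"
  shows "(\<integral>\<^sup>+v. ennreal (\<phi> v * v\<^sup>2) * indicator {0..L} v \<partial>lborel) + ennreal (L * \<phi> L) = (\<integral>\<^sup>+v. ennreal (\<phi> v) * indicator {0..L} v \<partial>lborel)"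
proof -
  have F: "(\<integral>\<^sup>+t. ennreal (\<phi> t * t) * indicator {v..L} t \<partial>lborel) = ennreal (\<phi> v - \<phi> L)" if "0 \<le> v" "v \<le> L" for v
  proof -
    have "(\<integral>\<^sup>+t. ennreal (\<phi> t * t) * indicator {v..L} t \<partial>lborel) = ennreal (- \<phi> L - (- \<phi> v))"
      by (rule nn_integral_FTC_Icc[OF _ phi_deriv]) (use that in auto)
    then show ?thesis by simp
  qed
  have Fub: "(\<integral>\<^sup>+v. \<integral>\<^sup>+t. ennreal (\<phi> t * t) * indicator {v..L} t * indicator {0..L} v \<partial>lborel \<partial>lborel) =
      (\<integral>\<^sup>+t. \<integral>\<^sup>+v. ennreal (\<phi> t * t) * indicator {v..L} t * indicator {0..L} v \<partial>lborel \<partial>lborel)"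
  proof -
    have e: "(\<lambda>(t, v). ennreal (\<phi> t * t) * indicator {v..L} t * indicator {0..L} v) =
      (\<lambda>x::real \<times> real. ennreal (\<phi> (fst x) * fst x) * indicator {x. snd x \<le> fst x} x * indicator {..L} (fst x) * indicator {0..L} (snd x))"
      by (auto simp: fun_eq_iff split: split_indicator)
    have [measurable]: "{x::real \<times> real. snd x \<le> fst x} \<in> sets (borel \<Otimes>\<^sub>M borel)"
      unfolding borel_prod by (rule borel_closed) (intro closed_Collect_le continuous_intros)
    have mm: "(\<lambda>x::real \<times> real. ennreal (\<phi> (fst x) * fst x) * indicator {x. snd x \<le> fst x} x * indicator {..L} (fst x) * indicator {0..L} (snd x)) \<in> borel_measurable (borel \<Otimes>\<^sub>M borel)"
      by measurable
    have "(\<lambda>(t, v). ennreal (\<phi> t * t) * indicator {v..L} t * indicator {0..L} v) \<in> borel_measurable (lborel \<Otimes>\<^sub>M lborel)"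
      unfolding e using mm by (simp add: measurable_cong_sets[OF sets_pair_measure_cong[OF sets_lborel sets_lborel] refl])
    from lborel_pair.Fubini'[OF this] show ?thesis by simp
  qed
  have iv: "(\<integral>\<^sup>+v. \<integral>\<^sup>+t. ennreal (\<phi> t * t) * indicator {v..L} t * indicator {0..L} v \<partial>lborel \<partial>lborel) =
      (\<integral>\<^sup>+v. ennreal (\<phi> v - \<phi> L) * indicator {0..L} v \<partial>lborel)"
  proof (intro nn_integral_cong)
    fix v :: real
    show "(\<integral>\<^sup>+t. ennreal (\<phi> t * t) * indicator {v..L} t * indicator {0..L} v \<partial>lborel) = ennreal (\<phi> v - \<phi> L) * indicator {0..L} v"
    proof (cases "0 \<le> v \<and> v \<le> L")
      case True
      then show ?thesis by (simp add: F)
    qed (auto split: split_indicator)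
  qed
  have it: "(\<integral>\<^sup>+t. \<integral>\<^sup>+v. ennreal (\<phi> t * t) * indicator {v..L} t * indicator {0..L} v \<partial>lborel \<partial>lborel) =
      (\<integral>\<^sup>+t. ennreal (\<phi> t * t\<^sup>2) * indicator {0..L} t \<partial>lborel)"
  proof (intro nn_integral_cong)
    fix t :: real
    have "(\<integral>\<^sup>+v. ennreal (\<phi> t * t) * indicator {v..L} t * indicator {0..L} v \<partial>lborel) = (\<integral>\<^sup>+v. (ennreal (\<phi> t * t) * indicator {0..L} t) * indicator {0..t} v \<partial>lborel)"
      by (intro nn_integral_cong) (auto split: split_indicator)
    also have "\<dots> = (ennreal (\<phi> t * t) * indicator {0..L} t) * emeasure lborel {0..t}"
      by (rule nn_integral_cmult_indicator) simp
    also have "\<dots> = ennreal (\<phi> t * t\<^sup>2) * indicator {0..L} t"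
      by (auto simp: ennreal_mult[symmetric] power2_eq_square mult.assoc split: split_indicator)
    finally show "(\<integral>\<^sup>+v. ennreal (\<phi> t * t) * indicator {v..L} t * indicator {0..L} v \<partial>lborel) = ennreal (\<phi> t * t\<^sup>2) * indicator {0..L} t" .
  qed
  have sp: "(\<integral>\<^sup>+v. ennreal (\<phi> v) * indicator {0..L} v \<partial>lborel) =
      (\<integral>\<^sup>+v. ennreal (\<phi> v - \<phi> L) * indicator {0..L} v + ennreal (\<phi> L) * indicator {0..L} v \<partial>lborel)"
  proof (intro nn_integral_cong)
    fix v :: real
    show "ennreal (\<phi> v) * indicator {0..L} v = ennreal (\<phi> v - \<phi> L) * indicator {0..L} v + ennreal (\<phi> L) * indicator {0..L} v"
    proof (cases "0 \<le> v \<and> v \<le> L")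
      case True
      then show ?thesis using phi_mono[of v L] by (simp add: ennreal_plus[symmetric] del: ennreal_plus)
    qed auto
  qed
  also have "\<dots> = (\<integral>\<^sup>+v. ennreal (\<phi> v - \<phi> L) * indicator {0..L} v \<partial>lborel) + ennreal (\<phi> L) * ennreal L"
    using L by (simp add: nn_integral_add nn_integral_cmult_indicator)
  finally show ?thesis using Fub iv it L by (simp add: ennreal_mult[symmetric] mult.commute)
qed

lemma phi_prod: "\<phi> a * \<phi> b = exp (- (a\<^sup>2 + b\<^sup>2) / 2) / (2 * pi)"
  by (simp add: phi_eq mult_exp_exp field_simps real_sqrt_mult[symmetric]) 

lemma inner_arc:
  "(\<integral>\<^sup>+v. ennreal (v * \<phi> (v * s) * \<phi> v) * indicator {0..} v \<partial>lborel) = ennreal (1 / (2 * pi * (1 + s\<^sup>2)))"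
proof -
  have b: "(1 + s\<^sup>2) / 2 > 0" by (simp add: add_pos_nonneg)
  have "(\<integral>\<^sup>+v. ennreal (v * \<phi> (v * s) * \<phi> v) * indicator {0..} v \<partial>lborel) =
      (\<integral>\<^sup>+v. ennreal (1 / (2 * pi)) * (ennreal (v * exp (- ((1 + s\<^sup>2) / 2 * v\<^sup>2))) * indicator {0..} v) \<partial>lborel)"
    by (intro nn_integral_cong) (auto simp: ennreal_mult[symmetric] mult.assoc phi_prod power_mult_distrib field_simps split: split_indicator)
  also have "\<dots> = ennreal (1 / (2 * pi)) * ennreal (1 / (2 * ((1 + s\<^sup>2) / 2)))"
    using G1[OF b] by (subst nn_integral_cmult) auto
  also have "\<dots> = ennreal (1 / (2 * pi * (1 + s\<^sup>2)))"
    by (simp add: ennreal_mult[symmetric])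
  finally show ?thesis .
qed

lemma lborel2_meas:
  "f \<in> borel_measurable (borel \<Otimes>\<^sub>M borel) \<Longrightarrow> f \<in> borel_measurable (lborel \<Otimes>\<^sub>M lborel)"
  by (simp add: measurable_cong_sets[OF sets_pair_measure_cong[OF sets_lborel sets_lborel] refl])

lemma ARC:
  assumes c: "c \<ge> 0"
  shows "(\<integral>\<^sup>+v. ennreal (\<phi> v) * indicator {0..} v * (\<integral>\<^sup>+u. ennreal (\<phi> u) * indicator {c * v..} u \<partial>lborel) \<partial>lborel)
    = ennreal (1/4 - arctan c / (2 * pi))"
proof -
  have S1: "ennreal (\<phi> v) * (\<integral>\<^sup>+u. ennreal (\<phi> u) * indicator {c * v..} u \<partial>lborel) =
      (\<integral>\<^sup>+s. ennreal (v * \<phi> (v * s) * \<phi> v) * indicator {c..} s \<partial>lborel)" if v: "v > 0" for v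
  proof -
    have "(\<integral>\<^sup>+u. ennreal (\<phi> u) * indicator {c * v..} u \<partial>lborel) =
        ennreal \<bar>v\<bar> * (\<integral>\<^sup>+s. ennreal (\<phi> (0 + v * s)) * indicator {c * v..} (0 + v * s) \<partial>lborel)"
      by (rule nn_integral_real_affine) (use v in auto)
    also have "(\<integral>\<^sup>+s. ennreal (\<phi> (0 + v * s)) * indicator {c * v..} (0 + v * s) \<partial>lborel) =
        (\<integral>\<^sup>+s. ennreal (\<phi> (v * s)) * indicator {c..} s \<partial>lborel)"
      using v by (intro nn_integral_cong) (auto simp: mult.commute split: split_indicator)
    finally have "ennreal (\<phi> v) * (\<integral>\<^sup>+u. ennreal (\<phi> u) * indicator {c * v..} u \<partial>lborel) =
        ennreal (\<phi> v * v) * (\<integral>\<^sup>+s. ennreal (\<phi> (v * s)) * indicator {c..} s \<partial>lborel)"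
      using v by (simp add: ennreal_mult mult.assoc)
    also have "\<dots> = (\<integral>\<^sup>+s. ennreal (\<phi> v * v) * (ennreal (\<phi> (v * s)) * indicator {c..} s) \<partial>lborel)"
      by (rule nn_integral_cmult[symmetric]) measurable
    also have "\<dots> = (\<integral>\<^sup>+s. ennreal (v * \<phi> (v * s) * \<phi> v) * indicator {c..} s \<partial>lborel)"
      using v by (intro nn_integral_cong) (simp add: ennreal_mult[symmetric] mult_ac)
    finally show ?thesis .
  qed
  have "(\<integral>\<^sup>+v. ennreal (\<phi> v) * indicator {0..} v * (\<integral>\<^sup>+u. ennreal (\<phi> u) * indicator {c * v..} u \<partial>lborel) \<partial>lborel) =
      (\<integral>\<^sup>+v. \<integral>\<^sup>+s. ennreal (v * \<phi> (v * s) * \<phi> v) * indicator {c..} s * indicator {0..} v \<partial>lborel \<partial>lborel)"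
  proof (intro nn_integral_cong_AE, use AE_lborel_singleton[of 0] in eventually_elim)
    fix v :: real assume "v \<noteq> 0"
    show "ennreal (\<phi> v) * indicator {0..} v * (\<integral>\<^sup>+u. ennreal (\<phi> u) * indicator {c * v..} u \<partial>lborel) =
      (\<integral>\<^sup>+s. ennreal (v * \<phi> (v * s) * \<phi> v) * indicator {c..} s * indicator {0..} v \<partial>lborel)"
    proof (cases "v > 0")
      case True
      then show ?thesis using S1[OF True] by (simp add: nn_integral_multc)
    next
      case False
      then show ?thesis using \<open>v \<noteq> 0\<close> by simp
    qed
  qed
  also have "\<dots> = (\<integral>\<^sup>+s. \<integral>\<^sup>+v. ennreal (v * \<phi> (v * s) * \<phi> v) * indicator {c..} s * indicator {0..} v \<partial>lborel \<partial>lborel)"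
  proof -
    have "(\<lambda>x::real \<times> real. ennreal (snd x * \<phi> (snd x * fst x) * \<phi> (snd x)) * indicator {c..} (fst x) * indicator {0..} (snd x)) \<in> borel_measurable (borel \<Otimes>\<^sub>M borel)"
      by measurable
    then have "(\<lambda>(s, v). ennreal (v * \<phi> (v * s) * \<phi> v) * indicator {c..} s * indicator {0..} v) \<in> borel_measurable (lborel \<Otimes>\<^sub>M lborel)"
      by (simp add: lborel2_meas split_beta')
    from lborel_pair.Fubini'[OF this] show ?thesis by simp
  qed
  also have "\<dots> = (\<integral>\<^sup>+s. ennreal (1 / (2 * pi * (1 + s\<^sup>2))) * indicator {c..} s \<partial>lborel)"
  proof (intro nn_integral_cong)
    fix s :: real
    show "(\<integral>\<^sup>+v. ennreal (v * \<phi> (v * s) * \<phi> v) * indicator {c..} s * indicator {0..} v \<partial>lborel) = ennreal (1 / (2 * pi * (1 + s\<^sup>2))) * indicator {c..} s"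
      using inner_arc[of s] by (auto split: split_indicator)
  qed
  also have "\<dots> = ennreal ((pi / 2) / (2 * pi) - arctan c / (2 * pi))"
  proof (rule nn_integral_FTC_atLeast)
    show "((\<lambda>x. arctan x / (2 * pi)) \<longlongrightarrow> (pi / 2) / (2 * pi)) at_top"
      by (intro tendsto_intros tendsto_arctan_at_top, simp)
    show "DERIV (\<lambda>x. arctan x / (2 * pi)) x :> 1 / (2 * pi * (1 + x\<^sup>2))" for x
      by (auto intro!: derivative_eq_intros simp: field_simps power2_eq_square add_nonneg_eq_0_iff)
  qed (auto simp: add_pos_nonneg)
  also have "(pi / 2) / (2 * pi) - arctan c / (2 * pi) = 1/4 - arctan c / (2 * pi)" by simp
  finally show ?thesis .
qed

lemma two_ennreal: "0 \<le> z \<Longrightarrow> 2 * ennreal z = ennreal (2 * z)"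
  by (simp add: ennreal_mult)

lemma NN_even_v:
  fixes h :: "real \<times> real \<Rightarrow> ennreal"
  assumes [measurable]: "h \<in> borel_measurable (borel \<Otimes>\<^sub>M borel)" and ev: "\<And>u v. h (u, - v) = h (u, v)"
  shows "(\<integral>\<^sup>+z. h z \<partial>NN) = 2 * (\<integral>\<^sup>+v. ennreal (\<phi> v) * indicator {0..} v * (\<integral>\<^sup>+u. ennreal (\<phi> u) * h (u, v) \<partial>lborel) \<partial>lborel)"
proof -
  define F where "F v = ennreal (\<phi> v) * (\<integral>\<^sup>+u. ennreal (\<phi> u) * h (u, v) \<partial>lborel)" for v
  have mh: "(\<lambda>(v, u). ennreal (\<phi> u) * h (u, v)) \<in> borel_measurable (lborel \<Otimes>\<^sub>M lborel)"
  proof -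
    have "(\<lambda>x::real \<times> real. ennreal (\<phi> (snd x)) * h (snd x, fst x)) \<in> borel_measurable (borel \<Otimes>\<^sub>M borel)"
      by measurable
    then show ?thesis by (simp add: lborel2_meas split_beta')
  qed
  have [measurable]: "F \<in> borel_measurable borel"
  proof -
    have "(\<lambda>v. \<integral>\<^sup>+u. ennreal (\<phi> u) * h (u, v) \<partial>lborel) \<in> borel_measurable lborel"
      using lborel.borel_measurable_nn_integral[OF mh] by simp
    then show ?thesis unfolding F_def by (simp add: measurable_lborel1[symmetric])
  qed
  have "(\<integral>\<^sup>+z. h z \<partial>NN) = (\<integral>\<^sup>+v. \<integral>\<^sup>+u. ennreal (\<phi> u) * ennreal (\<phi> v) * h (u, v) \<partial>lborel \<partial>lborel)"
    by (rule NN_iter(2)) measurable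
  also have "\<dots> = (\<integral>\<^sup>+v. F v \<partial>lborel)"
    unfolding F_def by (intro nn_integral_cong) (simp add: nn_integral_cmult[symmetric] mult_ac)
  also have "\<dots> = 2 * (\<integral>\<^sup>+v. F v * indicator {0..} v \<partial>lborel)"
    by (rule EVEN) (auto simp: F_def ev phi_even)
  finally show ?thesis by (simp add: F_def mult_ac)
qed

lemma NN_u_outer:
  fixes h :: "real \<times> real \<Rightarrow> ennreal"
  assumes [measurable]: "h \<in> borel_measurable (borel \<Otimes>\<^sub>M borel)"
  shows "(\<integral>\<^sup>+z. h z \<partial>NN) = (\<integral>\<^sup>+u. ennreal (\<phi> u) * (\<integral>\<^sup>+v. ennreal (\<phi> v) * h (u, v) \<partial>lborel) \<partial>lborel)"
proof -
  have "(\<integral>\<^sup>+z. h z \<partial>NN) = (\<integral>\<^sup>+u. \<integral>\<^sup>+v. ennreal (\<phi> u) * ennreal (\<phi> v) * h (u, v) \<partial>lborel \<partial>lborel)"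
    by (rule NN_iter(1)) measurable
  also have "\<dots> = (\<integral>\<^sup>+u. ennreal (\<phi> u) * (\<integral>\<^sup>+v. ennreal (\<phi> v) * h (u, v) \<partial>lborel) \<partial>lborel)"
    by (intro nn_integral_cong) (simp add: nn_integral_cmult[symmetric] mult_ac)
  finally show ?thesis .
qed

definition Rg :: "real \<Rightarrow> (real \<times> real) set" where
  "Rg c = {z. c * \<bar>snd z\<bar> \<le> fst z}"

lemma Rg_meas[measurable]: "Rg c \<in> sets (borel \<Otimes>\<^sub>M borel)"
proof -
  have "Rg c \<in> sets borel"
    unfolding Rg_def by (rule borel_closed) (intro closed_Collect_le continuous_intros)
  then show ?thesis unfolding borel_prod .
qed

lemma Rg_ev: "indicator (Rg c) (u, - v) = indicator (Rg c) (u, v)"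
  by (simp add: Rg_def indicator_def)

lemma J0:
  assumes c: "c \<ge> 0"
  shows "(\<integral>\<^sup>+z. indicator (Rg c) z \<partial>NN) = ennreal (1/2 - arctan c / pi)"
proof -
  have "(\<integral>\<^sup>+z. indicator (Rg c) z \<partial>NN) = 2 * (\<integral>\<^sup>+v. ennreal (\<phi> v) * indicator {0..} v * (\<integral>\<^sup>+u. ennreal (\<phi> u) * indicator (Rg c) (u, v) \<partial>lborel) \<partial>lborel)"
    by (rule NN_even_v) (auto simp: Rg_ev)
  also have "(\<integral>\<^sup>+v. ennreal (\<phi> v) * indicator {0..} v * (\<integral>\<^sup>+u. ennreal (\<phi> u) * indicator (Rg c) (u, v) \<partial>lborel) \<partial>lborel) =
      (\<integral>\<^sup>+v. ennreal (\<phi> v) * indicator {0..} v * (\<integral>\<^sup>+u. ennreal (\<phi> u) * indicator {c * v..} u \<partial>lborel) \<partial>lborel)"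
    by (intro nn_integral_cong) (auto simp: Rg_def indicator_def)
  also have "\<dots> = ennreal (1/4 - arctan c / (2 * pi))" by (rule ARC[OF c])
  finally have "(\<integral>\<^sup>+z. indicator (Rg c) z \<partial>NN) = 2 * ennreal (1/4 - arctan c / (2 * pi))" .
  also have "\<dots> = ennreal (1/2 - arctan c / pi)"
  proof -
    have "arctan c < pi / 2" by (rule arctan_ubound)
    then have "0 \<le> 1/4 - arctan c / (2 * pi)" by (simp add: field_simps)
    then have "ennreal (1/2 - arctan c / pi) = ennreal 2 * ennreal (1/4 - arctan c / (2 * pi))"
      by (subst ennreal_mult[symmetric]) (auto simp: field_simps)
    then show ?thesis by simp
  qed
  finally show ?thesis .
qed

lemma inner_meas:
  fixes h :: "real \<times> real \<Rightarrow> ennreal"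
  assumes [measurable]: "h \<in> borel_measurable (borel \<Otimes>\<^sub>M borel)"
  shows "(\<lambda>v. \<integral>\<^sup>+u. ennreal (\<phi> u) * h (u, v) \<partial>lborel) \<in> borel_measurable borel"
    and "(\<lambda>u. \<integral>\<^sup>+v. ennreal (\<phi> v) * h (u, v) \<partial>lborel) \<in> borel_measurable borel"
proof -
  have "(\<lambda>x::real \<times> real. ennreal (\<phi> (snd x)) * h (snd x, fst x)) \<in> borel_measurable (borel \<Otimes>\<^sub>M borel)"
    by measurable
  then have mh: "(\<lambda>(v, u). ennreal (\<phi> u) * h (u, v)) \<in> borel_measurable (lborel \<Otimes>\<^sub>M lborel)"
    by (simp add: lborel2_meas split_beta')
  have "(\<lambda>v. \<integral>\<^sup>+u. ennreal (\<phi> u) * h (u, v) \<partial>lborel) \<in> borel_measurable lborel"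
    using lborel.borel_measurable_nn_integral[OF mh] by simp
  then show "(\<lambda>v. \<integral>\<^sup>+u. ennreal (\<phi> u) * h (u, v) \<partial>lborel) \<in> borel_measurable borel"
    by (simp add: measurable_lborel1[symmetric])
  have "(\<lambda>x::real \<times> real. ennreal (\<phi> (snd x)) * h (fst x, snd x)) \<in> borel_measurable (borel \<Otimes>\<^sub>M borel)"
    by measurable
  then have mh: "(\<lambda>(u, v). ennreal (\<phi> v) * h (u, v)) \<in> borel_measurable (lborel \<Otimes>\<^sub>M lborel)"
    by (simp add: lborel2_meas split_beta')
  have "(\<lambda>u. \<integral>\<^sup>+v. ennreal (\<phi> v) * h (u, v) \<partial>lborel) \<in> borel_measurable lborel"
    using lborel.borel_measurable_nn_integral[OF mh] by simp
  then show "(\<lambda>u. \<integral>\<^sup>+v. ennreal (\<phi> v) * h (u, v) \<partial>lborel) \<in> borel_measurable borel"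
    by (simp add: measurable_lborel1[symmetric])
qed

lemma phi_prod_c: "\<phi> v * \<phi> (c * v) = (1 / (2 * pi)) * exp (- ((1 + c\<^sup>2) / 2 * v\<^sup>2))"
  by (simp add: phi_prod power_mult_distrib field_simps)

lemma Ju:
  assumes c: "c \<ge> 0"
  shows "(\<integral>\<^sup>+z. ennreal (fst z) * indicator (Rg c) z \<partial>NN) = ennreal (2 * (1 / (2 * pi)) * (sqrt pi / (2 * sqrt ((1 + c\<^sup>2) / 2))))"
proof -
  have b: "(1 + c\<^sup>2) / 2 > 0" by (simp add: add_pos_nonneg)
  have "(\<integral>\<^sup>+z. ennreal (fst z) * indicator (Rg c) z \<partial>NN) = 2 * (\<integral>\<^sup>+v. ennreal (\<phi> v) * indicator {0..} v * (\<integral>\<^sup>+u. ennreal (\<phi> u) * (ennreal (fst (u, v)) * indicator (Rg c) (u, v)) \<partial>lborel) \<partial>lborel)"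
    by (rule NN_even_v) (auto simp: Rg_ev)
  also have "(\<integral>\<^sup>+v. ennreal (\<phi> v) * indicator {0..} v * (\<integral>\<^sup>+u. ennreal (\<phi> u) * (ennreal (fst (u, v)) * indicator (Rg c) (u, v)) \<partial>lborel) \<partial>lborel) =
      (\<integral>\<^sup>+v. ennreal (1 / (2 * pi)) * (ennreal (exp (- ((1 + c\<^sup>2) / 2 * v\<^sup>2))) * indicator {0..} v) \<partial>lborel)"
  proof (intro nn_integral_cong)
    fix v :: real
    show "ennreal (\<phi> v) * indicator {0..} v * (\<integral>\<^sup>+u. ennreal (\<phi> u) * (ennreal (fst (u, v)) * indicator (Rg c) (u, v)) \<partial>lborel) =
      ennreal (1 / (2 * pi)) * (ennreal (exp (- ((1 + c\<^sup>2) / 2 * v\<^sup>2))) * indicator {0..} v)"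
    proof (cases "v \<ge> 0")
      case True
      have cv: "0 \<le> c * v" using True c by simp
      have "(\<integral>\<^sup>+u. ennreal (\<phi> u) * (ennreal (fst (u, v)) * indicator (Rg c) (u, v)) \<partial>lborel) = (\<integral>\<^sup>+u. ennreal (\<phi> u * u) * indicator {c * v..} u \<partial>lborel)"
      proof (intro nn_integral_cong)
        fix u :: real
        show "ennreal (\<phi> u) * (ennreal (fst (u, v)) * indicator (Rg c) (u, v)) = ennreal (\<phi> u * u) * indicator {c * v..} u"
        proof (cases "c * v \<le> u")
          case True
          then have "0 \<le> u" using cv by linarith
          then show ?thesis using True \<open>0 \<le> v\<close> by (simp add: Rg_def ennreal_mult)
        qed (use \<open>0 \<le> v\<close> in \<open>auto simp: Rg_def\<close>)
      qed
      also have "\<dots> = ennreal (\<phi> (c * v))" using True c by (simp add: T1)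
      finally show ?thesis using True phi_prod_c[of v c]
        by (simp add: ennreal_mult[symmetric])
    qed simp
  qed
  also have "\<dots> = ennreal (1 / (2 * pi)) * ennreal (sqrt pi / (2 * sqrt ((1 + c\<^sup>2) / 2)))"
    using G0[OF b] by (subst nn_integral_cmult) auto
  also have "ennreal (1 / (2 * pi)) * ennreal (sqrt pi / (2 * sqrt ((1 + c\<^sup>2) / 2))) = ennreal ((1 / (2 * pi)) * (sqrt pi / (2 * sqrt ((1 + c\<^sup>2) / 2))))"
    by (rule ennreal_mult[symmetric]) auto
  finally show ?thesis by (simp only: two_ennreal mult.assoc) (simp add: two_ennreal mult.assoc)
qed

lemma Juu:
  assumes c: "c \<ge> 0"
  shows "(\<integral>\<^sup>+z. ennreal ((fst z)\<^sup>2) * indicator (Rg c) z \<partial>NN) = ennreal (2 * (c / (2 * pi)) * (1 / (2 * ((1 + c\<^sup>2) / 2)))) + (\<integral>\<^sup>+z. indicator (Rg c) z \<partial>NN)"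
proof -
  have b: "(1 + c\<^sup>2) / 2 > 0" by (simp add: add_pos_nonneg)
  have J: "(\<integral>\<^sup>+z. indicator (Rg c) z \<partial>NN) = 2 * (\<integral>\<^sup>+v. ennreal (\<phi> v) * indicator {0..} v * (\<integral>\<^sup>+u. ennreal (\<phi> u) * indicator (Rg c) (u, v) \<partial>lborel) \<partial>lborel)"
    by (rule NN_even_v) (auto simp: Rg_ev)
  have "(\<integral>\<^sup>+z. ennreal ((fst z)\<^sup>2) * indicator (Rg c) z \<partial>NN) = 2 * (\<integral>\<^sup>+v. ennreal (\<phi> v) * indicator {0..} v * (\<integral>\<^sup>+u. ennreal (\<phi> u) * (ennreal ((fst (u, v))\<^sup>2) * indicator (Rg c) (u, v)) \<partial>lborel) \<partial>lborel)"
    by (rule NN_even_v) (auto simp: Rg_ev)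
  also have "(\<integral>\<^sup>+v. ennreal (\<phi> v) * indicator {0..} v * (\<integral>\<^sup>+u. ennreal (\<phi> u) * (ennreal ((fst (u, v))\<^sup>2) * indicator (Rg c) (u, v)) \<partial>lborel) \<partial>lborel) =
      (\<integral>\<^sup>+v. ennreal (c / (2 * pi)) * (ennreal (v * exp (- ((1 + c\<^sup>2) / 2 * v\<^sup>2))) * indicator {0..} v) +
         ennreal (\<phi> v) * indicator {0..} v * (\<integral>\<^sup>+u. ennreal (\<phi> u) * indicator (Rg c) (u, v) \<partial>lborel) \<partial>lborel)"
  proof (intro nn_integral_cong)
    fix v :: real
    show "ennreal (\<phi> v) * indicator {0..} v * (\<integral>\<^sup>+u. ennreal (\<phi> u) * (ennreal ((fst (u, v))\<^sup>2) * indicator (Rg c) (u, v)) \<partial>lborel) =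
      ennreal (c / (2 * pi)) * (ennreal (v * exp (- ((1 + c\<^sup>2) / 2 * v\<^sup>2))) * indicator {0..} v) +
         ennreal (\<phi> v) * indicator {0..} v * (\<integral>\<^sup>+u. ennreal (\<phi> u) * indicator (Rg c) (u, v) \<partial>lborel)"
    proof (cases "v \<ge> 0")
      case True
      have "(\<integral>\<^sup>+u. ennreal (\<phi> u) * (ennreal ((fst (u, v))\<^sup>2) * indicator (Rg c) (u, v)) \<partial>lborel) = (\<integral>\<^sup>+u. ennreal (\<phi> u * u\<^sup>2) * indicator {c * v..} u \<partial>lborel)"
        using True c by (intro nn_integral_cong) (auto simp: Rg_def ennreal_mult split: split_indicator)
      also have "\<dots> = ennreal (c * v * \<phi> (c * v)) + (\<integral>\<^sup>+u. ennreal (\<phi> u) * indicator {c * v..} u \<partial>lborel)"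
        using True c by (simp add: T2)
      also have "(\<integral>\<^sup>+u. ennreal (\<phi> u) * indicator {c * v..} u \<partial>lborel) = (\<integral>\<^sup>+u. ennreal (\<phi> u) * indicator (Rg c) (u, v) \<partial>lborel)"
        using True by (intro nn_integral_cong) (auto simp: Rg_def split: split_indicator)
      finally have e: "(\<integral>\<^sup>+u. ennreal (\<phi> u) * (ennreal ((fst (u, v))\<^sup>2) * indicator (Rg c) (u, v)) \<partial>lborel) =
          ennreal (c * v * \<phi> (c * v)) + (\<integral>\<^sup>+u. ennreal (\<phi> u) * indicator (Rg c) (u, v) \<partial>lborel)" .
      have "ennreal (\<phi> v) * ennreal (c * v * \<phi> (c * v)) = ennreal (c / (2 * pi)) * ennreal (v * exp (- ((1 + c\<^sup>2) / 2 * v\<^sup>2)))"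
      proof -
        have "\<phi> v * (c * v * \<phi> (c * v)) = (c / (2 * pi)) * (v * exp (- ((1 + c\<^sup>2) / 2 * v\<^sup>2)))"
          using phi_prod_c[of v c] by (simp add: field_simps)
        then show ?thesis using True c by (simp add: ennreal_mult[symmetric])
      qed
      then show ?thesis using True unfolding e by (simp add: distrib_left)
    qed simp
  qed
  also have "\<dots> = ennreal (c / (2 * pi)) * ennreal (1 / (2 * ((1 + c\<^sup>2) / 2))) +
      (\<integral>\<^sup>+v. ennreal (\<phi> v) * indicator {0..} v * (\<integral>\<^sup>+u. ennreal (\<phi> u) * indicator (Rg c) (u, v) \<partial>lborel) \<partial>lborel)"
  proof -
    have [measurable]: "(\<lambda>v. \<integral>\<^sup>+u. ennreal (\<phi> u) * indicator (Rg c) (u, v) \<partial>lborel) \<in> borel_measurable borel"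
      by (rule inner_meas(1)) measurable
    show ?thesis using G1[OF b] by (subst nn_integral_add) (auto simp: nn_integral_cmult)
  qed
  finally have "(\<integral>\<^sup>+z. ennreal ((fst z)\<^sup>2) * indicator (Rg c) z \<partial>NN) = 2 * (ennreal (c / (2 * pi)) * ennreal (1 / (2 * ((1 + c\<^sup>2) / 2)))) +
      2 * (\<integral>\<^sup>+v. ennreal (\<phi> v) * indicator {0..} v * (\<integral>\<^sup>+u. ennreal (\<phi> u) * indicator (Rg c) (u, v) \<partial>lborel) \<partial>lborel)"
    by (simp only: distrib_left)
  moreover have "2 * (ennreal (c / (2 * pi)) * ennreal (1 / (2 * ((1 + c\<^sup>2) / 2)))) = ennreal (2 * (c / (2 * pi)) * (1 / (2 * ((1 + c\<^sup>2) / 2))))"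
  proof -
    have "ennreal (c / (2 * pi)) * ennreal (1 / (2 * ((1 + c\<^sup>2) / 2))) = ennreal (c / (2 * pi) * (1 / (2 * ((1 + c\<^sup>2) / 2))))"
      by (rule ennreal_mult[symmetric]) (use c b in auto)
    then show ?thesis using c b by (simp add: two_ennreal mult.assoc)
  qed
  ultimately show ?thesis unfolding J by simp
qed

lemma Jvv:
  assumes c: "c > 0"
  shows "(\<integral>\<^sup>+z. ennreal ((snd z)\<^sup>2) * indicator (Rg c) z \<partial>NN) + ennreal ((2 / c) * (1 / (2 * pi)) * (1 / (2 * ((1 + (1/c)\<^sup>2) / 2)))) = (\<integral>\<^sup>+z. indicator (Rg c) z \<partial>NN)"
proof -
  define I1 where "I1 u = (\<integral>\<^sup>+v. ennreal (\<phi> v) * (ennreal ((snd (u, v))\<^sup>2) * indicator (Rg c) (u, v)) \<partial>lborel)" for u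
  define I0 where "I0 u = (\<integral>\<^sup>+v. ennreal (\<phi> v) * indicator (Rg c) (u, v) \<partial>lborel)" for u
  have b: "(1 + (1/c)\<^sup>2) / 2 > 0" by (simp add: add_pos_nonneg)
  have key: "I1 u + ennreal (2 * (u / c) * \<phi> (u / c)) * indicator {0..} u = I0 u" for u
  proof (cases "u \<ge> 0")
    case False
    have "indicator (Rg c) (u, v) = (0::ennreal)" for v
    proof -
      have "c * \<bar>v\<bar> \<ge> 0" using c by simp
      then have "\<not> (c * \<bar>v\<bar> \<le> u)" using False by linarith
      then show ?thesis by (simp add: Rg_def)
    qed
    then show ?thesis using False by (simp add: I1_def I0_def)
  next
    case True
    define L where "L = u / c"
    have L: "L \<ge> 0" using True c by (simp add: L_def)
    have reg: "indicator (Rg c) (u, v) * indicator {0..} v = (indicator {0..L} v :: ennreal)" for v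
      using c by (cases "0 \<le> v") (simp_all add: Rg_def L_def indicator_def pos_le_divide_eq mult.commute)
    have "I1 u = 2 * (\<integral>\<^sup>+v. ennreal (\<phi> v) * (ennreal ((snd (u, v))\<^sup>2) * indicator (Rg c) (u, v)) * indicator {0..} v \<partial>lborel)"
      unfolding I1_def by (rule EVEN) (auto simp: phi_even Rg_ev)
    also have "(\<integral>\<^sup>+v. ennreal (\<phi> v) * (ennreal ((snd (u, v))\<^sup>2) * indicator (Rg c) (u, v)) * indicator {0..} v \<partial>lborel) =
        (\<integral>\<^sup>+v. ennreal (\<phi> v * v\<^sup>2) * indicator {0..L} v \<partial>lborel)"
      by (intro nn_integral_cong) (simp add: mult.assoc reg ennreal_mult)
    finally have e1: "I1 u = 2 * (\<integral>\<^sup>+v. ennreal (\<phi> v * v\<^sup>2) * indicator {0..L} v \<partial>lborel)" .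
    have "I0 u = 2 * (\<integral>\<^sup>+v. ennreal (\<phi> v) * indicator (Rg c) (u, v) * indicator {0..} v \<partial>lborel)"
      unfolding I0_def by (rule EVEN) (auto simp: phi_even Rg_ev)
    also have "(\<integral>\<^sup>+v. ennreal (\<phi> v) * indicator (Rg c) (u, v) * indicator {0..} v \<partial>lborel) =
        (\<integral>\<^sup>+v. ennreal (\<phi> v) * indicator {0..L} v \<partial>lborel)"
      by (intro nn_integral_cong) (simp add: mult.assoc reg)
    finally have e0: "I0 u = 2 * (\<integral>\<^sup>+v. ennreal (\<phi> v) * indicator {0..L} v \<partial>lborel)" .
    have "2 * ennreal (L * \<phi> L) = ennreal (2 * (L * \<phi> L))" by (rule two_ennreal) (use L in simp)
    moreover have "ennreal (2 * (u / c) * \<phi> (u / c)) = ennreal (2 * (L * \<phi> L))" by (simp add: L_def mult.assoc)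
    ultimately have "ennreal (2 * (u / c) * \<phi> (u / c)) = 2 * ennreal (L * \<phi> L)" by simp
    then show ?thesis using True unfolding e1 e0 T3[OF L, symmetric] by (simp add: distrib_left)
  qed
  have "(\<integral>\<^sup>+z. indicator (Rg c) z \<partial>NN) = (\<integral>\<^sup>+u. ennreal (\<phi> u) * I0 u \<partial>lborel)"
    unfolding I0_def by (rule NN_u_outer) measurable
  also have "\<dots> = (\<integral>\<^sup>+u. ennreal (\<phi> u) * I1 u + ennreal ((2 / c) * (1 / (2 * pi))) * (ennreal (u * exp (- ((1 + (1/c)\<^sup>2) / 2 * u\<^sup>2))) * indicator {0..} u) \<partial>lborel)"
  proof (intro nn_integral_cong)
    fix u :: real
    have "\<phi> u * (2 * (u / c) * \<phi> (u / c)) = (2 / c) * (1 / (2 * pi)) * (u * exp (- ((1 + (1/c)\<^sup>2) / 2 * u\<^sup>2)))"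
    proof -
      have p: "\<phi> u * \<phi> (u / c) = (1 / (2 * pi)) * exp (- ((1 + (1/c)\<^sup>2) / 2 * u\<^sup>2))"
        using phi_prod_c[of u "1/c"] by (simp add: mult.commute)
      have "\<phi> u * (2 * (u / c) * \<phi> (u / c)) = (2 / c) * u * (\<phi> u * \<phi> (u / c))"
        by (simp add: algebra_simps)
      also have "\<dots> = (2 / c) * (1 / (2 * pi)) * (u * exp (- ((1 + (1/c)\<^sup>2) / 2 * u\<^sup>2)))"
        unfolding p by (simp add: algebra_simps)
      finally show ?thesis .
    qed
    then have "ennreal (\<phi> u) * (ennreal (2 * (u / c) * \<phi> (u / c)) * indicator {0..} u) =
        ennreal ((2 / c) * (1 / (2 * pi))) * (ennreal (u * exp (- ((1 + (1/c)\<^sup>2) / 2 * u\<^sup>2))) * indicator {0..} u)"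
      using c by (auto simp: ennreal_mult[symmetric] split: split_indicator)
    then show "ennreal (\<phi> u) * I0 u = ennreal (\<phi> u) * I1 u + ennreal ((2 / c) * (1 / (2 * pi))) * (ennreal (u * exp (- ((1 + (1/c)\<^sup>2) / 2 * u\<^sup>2))) * indicator {0..} u)"
      unfolding key[of u, symmetric] by (simp add: distrib_left)
  qed
  also have "\<dots> = (\<integral>\<^sup>+u. ennreal (\<phi> u) * I1 u \<partial>lborel) + ennreal ((2 / c) * (1 / (2 * pi))) * ennreal (1 / (2 * ((1 + (1/c)\<^sup>2) / 2)))"
  proof -
    have [measurable]: "I1 \<in> borel_measurable borel"
      unfolding I1_def by (rule inner_meas(2)) measurable
    show ?thesis using G1[OF b] by (subst nn_integral_add) (auto simp: nn_integral_cmult)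
  qed
  also have "(\<integral>\<^sup>+u. ennreal (\<phi> u) * I1 u \<partial>lborel) = (\<integral>\<^sup>+z. ennreal ((snd z)\<^sup>2) * indicator (Rg c) z \<partial>NN)"
    unfolding I1_def by (rule NN_u_outer[symmetric]) measurable
  also have "ennreal ((2 / c) * (1 / (2 * pi))) * ennreal (1 / (2 * ((1 + (1/c)\<^sup>2) / 2))) = ennreal ((2 / c) * (1 / (2 * pi)) * (1 / (2 * ((1 + (1/c)\<^sup>2) / 2))))"
    by (rule ennreal_mult[symmetric]) (use c b in auto)
  finally show ?thesis ..
qed

definition "j0 c = 1/2 - arctan c / pi"
definition "ju c = 2 * (1 / (2 * pi)) * (sqrt pi / (2 * sqrt ((1 + c\<^sup>2) / 2)))"
definition "ku c = 2 * (c / (2 * pi)) * (1 / (2 * ((1 + c\<^sup>2) / 2)))"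
definition "kv c = (2 / c) * (1 / (2 * pi)) * (1 / (2 * ((1 + (1/c)\<^sup>2) / 2)))"

lemma hb_nn:
  fixes f :: "real \<times> real \<Rightarrow> real"
  assumes [measurable]: "f \<in> borel_measurable (borel \<Otimes>\<^sub>M borel)" and nn: "\<And>z. 0 \<le> f z" and x: "0 \<le> x"
    and I: "(\<integral>\<^sup>+z. ennreal (f z) \<partial>NN) = ennreal x"
  shows "has_bochner_integral NN f x"
  by (rule has_bochner_integral_nn_integral) (use nn x I in auto)

lemma j0_nonneg: "0 \<le> j0 c"
  using arctan_ubound[of c] by (simp add: j0_def field_simps)

lemma HB0: "c \<ge> 0 \<Longrightarrow> has_bochner_integral NN (\<lambda>z. indicator (Rg c) z) (j0 c)"
proof (rule hb_nn)
  assume c: "c \<ge> 0"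
  show "(\<integral>\<^sup>+z. ennreal (indicator (Rg c) z) \<partial>NN) = ennreal (j0 c)"
    using J0[OF c] by (simp add: j0_def ennreal_indicator)
qed (auto simp: j0_nonneg)

lemma HBu: "c \<ge> 0 \<Longrightarrow> has_bochner_integral NN (\<lambda>z. indicator (Rg c) z * fst z) (ju c)"
proof (rule hb_nn)
  assume c: "c \<ge> 0"
  show "0 \<le> indicator (Rg c) z * fst z" for z
  proof (cases "z \<in> Rg c")
    case True
    then have "c * \<bar>snd z\<bar> \<le> fst z" by (simp add: Rg_def)
    moreover have "0 \<le> c * \<bar>snd z\<bar>" using c by simp
    ultimately show ?thesis using True by simp
  qed simp
  show "0 \<le> ju c" by (simp add: ju_def)
  have "(\<integral>\<^sup>+z. ennreal (indicator (Rg c) z * fst z) \<partial>NN) = (\<integral>\<^sup>+z. ennreal (fst z) * indicator (Rg c) z \<partial>NN)"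
    by (intro nn_integral_cong) (auto simp: indicator_def)
  then show "(\<integral>\<^sup>+z. ennreal (indicator (Rg c) z * fst z) \<partial>NN) = ennreal (ju c)"
    using Ju[OF c] by (simp add: ju_def)
qed simp

lemma HBuu: "c \<ge> 0 \<Longrightarrow> has_bochner_integral NN (\<lambda>z. indicator (Rg c) z * (fst z)\<^sup>2) (ku c + j0 c)"
proof (rule hb_nn)
  assume c: "c \<ge> 0"
  show "0 \<le> indicator (Rg c) z * (fst z)\<^sup>2" for z by simp
  show "0 \<le> ku c + j0 c" using c by (simp add: ku_def j0_nonneg add_pos_nonneg)
  have "(\<integral>\<^sup>+z. ennreal (indicator (Rg c) z * (fst z)\<^sup>2) \<partial>NN) = (\<integral>\<^sup>+z. ennreal ((fst z)\<^sup>2) * indicator (Rg c) z \<partial>NN)"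
    by (intro nn_integral_cong) (auto simp: indicator_def)
  also have "\<dots> = ennreal (ku c) + ennreal (j0 c)"
    using Juu[OF c] J0[OF c] by (simp add: ku_def j0_def)
  also have "\<dots> = ennreal (ku c + j0 c)"
    using c by (simp add: ku_def j0_nonneg ennreal_plus)
  finally show "(\<integral>\<^sup>+z. ennreal (indicator (Rg c) z * (fst z)\<^sup>2) \<partial>NN) = ennreal (ku c + j0 c)" .
qed simp

lemma HBvv: "c > 0 \<Longrightarrow> has_bochner_integral NN (\<lambda>z. indicator (Rg c) z * (snd z)\<^sup>2) (j0 c - kv c)"
proof -
  assume c: "c > 0"
  have kv: "0 \<le> kv c" using c by (simp add: kv_def)
  define X where "X = (\<integral>\<^sup>+z. ennreal (indicator (Rg c) z * (snd z)\<^sup>2) \<partial>NN)"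
  have "X = (\<integral>\<^sup>+z. ennreal ((snd z)\<^sup>2) * indicator (Rg c) z \<partial>NN)"
    unfolding X_def by (intro nn_integral_cong) (auto simp: indicator_def)
  then have e: "X + ennreal (kv c) = ennreal (j0 c)"
    using Jvv[OF c] J0[of c] c by (simp add: kv_def j0_def)
  then have "X \<noteq> \<infinity>" by auto
  then obtain x where x: "X = ennreal x" "0 \<le> x" by (cases X) auto
  with e kv have "ennreal (x + kv c) = ennreal (j0 c)" by (simp add: ennreal_plus[symmetric] del: ennreal_plus)
  then have "x + kv c = j0 c" using x kv j0_nonneg[of c] by (subst (asm) ennreal_inj) auto
  then have xx: "x = j0 c - kv c" by simp
  show ?thesis
  proof (rule hb_nn)
    show "0 \<le> indicator (Rg c) z * (snd z)\<^sup>2" for z by simp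
    show "0 \<le> j0 c - kv c" using x xx by simp
    show "(\<integral>\<^sup>+z. ennreal (indicator (Rg c) z * (snd z)\<^sup>2) \<partial>NN) = ennreal (j0 c - kv c)"
      using x xx X_def by simp
  qed simp
qed

lemma arctan_ba:
  fixes \<rho> :: real
  assumes r1: "-1 < \<rho>" and r2: "\<rho> \<le> 1"
  shows "arctan (sqrt ((1-\<rho>)/2) / sqrt ((1+\<rho>)/2)) = pi/4 - arcsin \<rho> / 2"
proof -
  define \<theta> where "\<theta> = pi/4 - arcsin \<rho> / 2"
  have as1: "arcsin \<rho> \<le> pi/2" using arcsin_bounded[of \<rho>] r1 r2 by simp
  have "arcsin (-1) < arcsin \<rho>" by (rule arcsin_less_arcsin) (use r1 r2 in auto)
  then have as2: "- (pi/2) < arcsin \<rho>" by simp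
  have th1: "0 \<le> \<theta>" "\<theta> < pi/2" using as1 as2 by (auto simp: \<theta>_def)
  have "cos (2 * \<theta>) = sin (arcsin \<rho>)"
    by (simp add: \<theta>_def cos_sin_eq algebra_simps)
  then have c2: "cos (2 * \<theta>) = \<rho>" using r1 r2 by simp
  have cpos: "cos \<theta> > 0" by (rule cos_gt_zero_pi) (use th1 in auto)
  have spos: "sin \<theta> \<ge> 0" by (rule sin_ge_zero) (use th1 in auto)
  have "(cos \<theta>)\<^sup>2 = (1 + \<rho>) / 2" using c2 cos_double_cos[of \<theta>] by simp
  then have ca: "cos \<theta> = sqrt ((1+\<rho>)/2)" using cpos by (metis abs_of_pos real_sqrt_abs)
  have "(sin \<theta>)\<^sup>2 = (1 - \<rho>) / 2" using c2 cos_double_sin[of \<theta>] by simp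
  then have sb: "sin \<theta> = sqrt ((1-\<rho>)/2)" using spos by (metis abs_of_nonneg real_sqrt_abs)
  have "tan \<theta> = sqrt ((1-\<rho>)/2) / sqrt ((1+\<rho>)/2)" by (simp add: tan_def ca sb)
  moreover have "arctan (tan \<theta>) = \<theta>" by (rule arctan_tan) (use th1 in auto)
  ultimately show ?thesis by (simp add: \<theta>_def)
qed

lemma j0_val:
  assumes r1: "-1 < \<rho>" and r2: "\<rho> \<le> 1"
  shows "j0 (sqrt ((1-\<rho>)/2) / sqrt ((1+\<rho>)/2)) = (arcsin \<rho> + pi/2) / (2 * pi)"
  unfolding j0_def arctan_ba[OF r1 r2] by (simp add: field_simps)

lemma ju_val:
  assumes a: "a > 0" and ab: "a\<^sup>2 + b\<^sup>2 = 1"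
  shows "a * ju (b / a) = a\<^sup>2 / sqrt (2 * pi)"
proof -
  have "1 + (b/a)\<^sup>2 = 1 / a\<^sup>2" using a ab by (simp add: field_simps power2_eq_square)
  then have "sqrt ((1 + (b/a)\<^sup>2) / 2) = 1 / (a * sqrt 2)"
    using a by (simp add: real_sqrt_divide real_sqrt_mult)
  then have "ju (b/a) = a * (sqrt 2 * sqrt pi) / (2 * pi)"
    unfolding ju_def using a by (simp add: field_simps)
  also have "sqrt 2 * sqrt pi = sqrt (2 * pi)" by (simp add: real_sqrt_mult)
  also have "a * sqrt (2 * pi) / (2 * pi) = a * (sqrt (2 * pi) / (2 * pi))" by simp
  also have "sqrt (2 * pi) / (2 * pi) = 1 / sqrt (2 * pi)"
  proof -
    have p: "sqrt (2 * pi) > 0" by simp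
    have "sqrt (2 * pi) * sqrt (2 * pi) = 2 * pi" by simp
    then show ?thesis using p by (simp add: field_simps)
  qed
  finally have "ju (b/a) = a * (1 / sqrt (2 * pi))" .
  then show ?thesis by (simp add: power2_eq_square)
qed

lemma ku_val:
  assumes a: "a > 0" and ab: "a\<^sup>2 + b\<^sup>2 = 1"
  shows "ku (b / a) = a * b / pi"
proof -
  have "1 + (b/a)\<^sup>2 = 1 / a\<^sup>2" using a ab by (simp add: field_simps power2_eq_square)
  then show ?thesis unfolding ku_def using a by (simp add: field_simps power2_eq_square)
qed

lemma kv_val:
  assumes a: "a > 0" and b: "b > 0" and ab: "a\<^sup>2 + b\<^sup>2 = 1"
  shows "kv (b / a) = a * b / pi"
proof -
  have "1 + (1 / (b/a))\<^sup>2 = 1 / b\<^sup>2" using a b ab by (simp add: field_simps power2_eq_square)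
  then show ?thesis unfolding kv_def using a b by (simp add: field_simps power2_eq_square)
qed

lemma ab_prod:
  assumes "-1 \<le> \<rho>" "\<rho> \<le> 1"
  shows "sqrt ((1+\<rho>)/2) * sqrt ((1-\<rho>)/2) = sqrt (1 - \<rho>\<^sup>2) / 2"
proof -
  have "sqrt ((1+\<rho>)/2) * sqrt ((1-\<rho>)/2) = sqrt ((1 - \<rho>\<^sup>2) / 4)"
    by (simp add: real_sqrt_mult[symmetric] power2_eq_square field_simps)
  also have "\<dots> = sqrt (1 - \<rho>\<^sup>2) / 2" by (simp add: real_sqrt_divide)
  finally show ?thesis .
qed

lemma test1: "(\<integral>\<^sup>+v. ennreal (\<phi> v) * indicator {0::real} v \<partial>lborel) = ennreal (\<phi> 0) * emeasure lborel {0::real}"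
proof -
  have "(\<integral>\<^sup>+v. ennreal (\<phi> v) * indicator {0::real} v \<partial>lborel) = (\<integral>\<^sup>+v. ennreal (\<phi> 0) * indicator {0::real} v \<partial>lborel)"
    by (rule nn_integral_cong) (auto simp: indicator_def)
  also have "\<dots> = ennreal (\<phi> 0) * emeasure lborel {0::real}"
    by (rule nn_integral_cmult_indicator) simp
  finally show ?thesis .
qed


lemma NN_snd0: "measure NN {z. snd z = 0} = 0"
proof -
  have [measurable]: "{z::real \<times> real. snd z = 0} \<in> sets (borel \<Otimes>\<^sub>M borel)"
    unfolding borel_prod by (rule borel_closed) (intro closed_Collect_eq continuous_intros)
  have "emeasure NN {z. snd z = 0} = (\<integral>\<^sup>+z. indicator {z. snd z = 0} z \<partial>NN)" by simp
  also have "\<dots> = (\<integral>\<^sup>+u. ennreal (\<phi> u) * (\<integral>\<^sup>+v. ennreal (\<phi> v) * indicator {z. snd z = 0} (u, v) \<partial>lborel) \<partial>lborel)"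
    by (rule NN_u_outer) measurable
  also have "\<dots> = (\<integral>\<^sup>+u. ennreal (\<phi> u) * (\<integral>\<^sup>+v. ennreal (\<phi> v) * indicator {0::real} v \<partial>lborel) \<partial>lborel)"
    by (intro nn_integral_cong arg_cong2[where f="(*)"] refl) (auto simp: indicator_def)
  also have "\<dots> = 0" by (simp add: test1)
  finally show ?thesis by (simp add: measure_def)
qed


lemma region_eq:
  fixes a b u v :: real
  assumes a: "a > 0" and b: "b \<ge> 0"
  shows "(0 \<le> a * u + b * v \<and> 0 \<le> a * u - b * v) \<longleftrightarrow> (b / a) * \<bar>v\<bar> \<le> u"
proof -
  have "(b / a) * \<bar>v\<bar> \<le> u \<longleftrightarrow> b * \<bar>v\<bar> \<le> a * u"
    using a by (simp add: field_simps mult.commute)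
  moreover have "(0 \<le> a * u + b * v \<and> 0 \<le> a * u - b * v) \<longleftrightarrow> b * \<bar>v\<bar> \<le> a * u"
  proof (cases "v \<ge> 0")
    case True
    then have "0 \<le> b * v" using b by simp
    then show ?thesis using True by auto
  next
    case False
    then have "b * v \<le> 0" using b by (simp add: mult_nonneg_nonpos)
    then show ?thesis using False by auto
  qed
  ultimately show ?thesis by simp
qed

lemma pair_main:
  fixes M :: "'w measure" and X Y :: "'w \<Rightarrow> real" and \<rho> :: real
  assumes P: "prob_space M"
    and lin: "\<And>s t. real_normal_rv M (\<lambda>\<omega>. s * X \<omega> + t * Y \<omega>)"
    and m0: "(\<integral>\<omega>. X \<omega> \<partial>M) = 0" "(\<integral>\<omega>. Y \<omega> \<partial>M) = 0"
    and v1: "(\<integral>\<omega>. X \<omega> * X \<omega> \<partial>M) = 1" "(\<integral>\<omega>. Y \<omega> * Y \<omega> \<partial>M) = 1"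
    and c: "(\<integral>\<omega>. X \<omega> * Y \<omega> \<partial>M) = \<rho>"
    and pos: "measure M {\<omega> \<in> space M. X \<omega> \<ge> 0 \<and> Y \<omega> \<ge> 0} > 0 \<or> -1 < \<rho>"
  defines "A \<equiv> {\<omega> \<in> space M. X \<omega> \<ge> 0 \<and> Y \<omega> \<ge> 0}"
  shows "-1 < \<rho> \<and> \<rho> \<le> 1 \<and>
    measure M A = (arcsin \<rho> + pi/2) / (2 * pi) \<and>
    (\<integral>\<omega>. indicator A \<omega> * X \<omega> \<partial>M) = (1 + \<rho>) / (2 * sqrt (2 * pi)) \<and>
    (\<integral>\<omega>. indicator A \<omega> * (X \<omega>)\<^sup>2 \<partial>M) = (pi/2 + arcsin \<rho> + \<rho> * sqrt (1 - \<rho>\<^sup>2)) / (2 * pi) \<and>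
    (\<integral>\<omega>. indicator A \<omega> * (X \<omega> * Y \<omega>) \<partial>M) = (\<rho> * (pi/2 + arcsin \<rho>) + sqrt (1 - \<rho>\<^sup>2)) / (2 * pi) \<and>
    (\<integral>\<omega>. indicator A \<omega> * X \<omega> \<partial>M)\<^sup>2 \<le> measure M A * (\<integral>\<omega>. indicator A \<omega> * (X \<omega>)\<^sup>2 \<partial>M)"
proof -
  interpret prob_space M by fact
  have nX: "real_normal_rv M X" using lin[of 1 0] by simp
  have nY: "real_normal_rv M Y" using lin[of 0 1] by simp
  have nXY: "real_normal_rv M (\<lambda>\<omega>. X \<omega> + Y \<omega>)" using lin[of 1 1] by simp
  have mX[measurable]: "X \<in> borel_measurable M" and mY[measurable]: "Y \<in> borel_measurable M"
    using nX nY by (auto simp: real_normal_rv_def)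
  have iX: "integrable M X" and iX2: "integrable M (\<lambda>\<omega>. (X \<omega>)\<^sup>2)"
    using normal_rv_facts(1,2)[OF P nX] by auto
  have iY: "integrable M Y" and iY2: "integrable M (\<lambda>\<omega>. (Y \<omega>)\<^sup>2)"
    using normal_rv_facts(1,2)[OF P nY] by auto
  have iS: "integrable M (\<lambda>\<omega>. (X \<omega> + Y \<omega>)\<^sup>2)"
    using normal_rv_facts(2)[OF P nXY] by auto
  have iXY: "integrable M (\<lambda>\<omega>. X \<omega> * Y \<omega>)"
  proof -
    have "integrable M (\<lambda>\<omega>. ((X \<omega> + Y \<omega>)\<^sup>2 - (X \<omega>)\<^sup>2 - (Y \<omega>)\<^sup>2) / 2)"
      using iS iX2 iY2 by auto
    then show ?thesis by (simp add: power2_eq_square algebra_simps)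
  qed
  have [measurable]: "A \<in> sets M" unfolding A_def by measurable
  have ind_bound: "integrable M (\<lambda>\<omega>. indicator A \<omega> * f \<omega>)" if "integrable M f" for f :: "'w \<Rightarrow> real"
  proof -
    have [measurable]: "f \<in> borel_measurable M" using that by auto
    show ?thesis
      by (rule Bochner_Integration.integrable_bound[OF that]) (auto intro!: AE_I2 simp: indicator_def)
  qed
  define a where "a = sqrt ((1+\<rho>)/2)"
  define b where "b = sqrt ((1-\<rho>)/2)"
  define \<Phi> where "\<Phi> z = (a * fst z + b * snd z, a * fst z - b * snd z)" for z :: "real \<times> real"
  have Phi_fst: "fst (\<Phi> z) = a * fst z + b * snd z" and Phi_snd: "snd (\<Phi> z) = a * fst z - b * snd z" for z
    by (simp_all add: \<Phi>_def)
  have Phi_eq: "\<Phi> = (\<lambda>z. (a * fst z + b * snd z, a * fst z - b * snd z))" by (simp add: fun_eq_iff \<Phi>_def)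
  have L1: "-1 \<le> \<rho> \<and> \<rho> \<le> 1 \<and> distr M (borel \<Otimes>\<^sub>M borel) (\<lambda>\<omega>. (X \<omega>, Y \<omega>)) = distr NN (borel \<Otimes>\<^sub>M borel) \<Phi>"
    using pair_law[OF P lin m0 v1 c] by (simp add: Phi_eq a_def b_def)
  have lin': "real_normal_rv M (\<lambda>\<omega>. s * Y \<omega> + t * X \<omega>)" for s t
    using lin[of t s] by (simp add: add.commute)
  have L2: "distr M (borel \<Otimes>\<^sub>M borel) (\<lambda>\<omega>. (Y \<omega>, X \<omega>)) = distr NN (borel \<Otimes>\<^sub>M borel) \<Phi>"
    using pair_law[OF P lin' m0(2) m0(1) v1(2) v1(1)] c by (simp add: Phi_eq a_def b_def mult.commute)
  have r2: "-1 \<le> \<rho>" and r1: "\<rho> \<le> 1" and D1: "distr M (borel \<Otimes>\<^sub>M borel) (\<lambda>\<omega>. (X \<omega>, Y \<omega>)) = distr NN (borel \<Otimes>\<^sub>M borel) \<Phi>"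
    using L1 by auto
  have mPhi[measurable]: "\<Phi> \<in> measurable NN (borel \<Otimes>\<^sub>M borel)"
    unfolding \<Phi>_def by measurable
  have tr: "(\<integral>\<omega>. F (X \<omega>, Y \<omega>) \<partial>M) = (\<integral>z. F (\<Phi> z) \<partial>NN)" if [measurable]: "F \<in> borel_measurable (borel \<Otimes>\<^sub>M borel)" for F :: "real \<times> real \<Rightarrow> real"
  proof -
    have "(\<integral>\<omega>. F (X \<omega>, Y \<omega>) \<partial>M) = (\<integral>p. F p \<partial>distr M (borel \<Otimes>\<^sub>M borel) (\<lambda>\<omega>. (X \<omega>, Y \<omega>)))"
      by (rule integral_distr[symmetric]) auto
    also have "\<dots> = (\<integral>p. F p \<partial>distr NN (borel \<Otimes>\<^sub>M borel) \<Phi>)" by (simp add: D1)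
    also have "\<dots> = (\<integral>z. F (\<Phi> z) \<partial>NN)" by (rule integral_distr) auto
    finally show ?thesis .
  qed
  have sw: "(\<integral>\<omega>. F (X \<omega>, Y \<omega>) \<partial>M) = (\<integral>\<omega>. F (Y \<omega>, X \<omega>) \<partial>M)" if [measurable]: "F \<in> borel_measurable (borel \<Otimes>\<^sub>M borel)" for F :: "real \<times> real \<Rightarrow> real"
  proof -
    have "(\<integral>\<omega>. F (X \<omega>, Y \<omega>) \<partial>M) = (\<integral>p. F p \<partial>distr M (borel \<Otimes>\<^sub>M borel) (\<lambda>\<omega>. (X \<omega>, Y \<omega>)))"
      by (rule integral_distr[symmetric]) auto
    also have "\<dots> = (\<integral>p. F p \<partial>distr M (borel \<Otimes>\<^sub>M borel) (\<lambda>\<omega>. (Y \<omega>, X \<omega>)))" by (simp add: D1 L2)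
    also have "\<dots> = (\<integral>\<omega>. F (Y \<omega>, X \<omega>) \<partial>M)" by (rule integral_distr) auto
    finally show ?thesis .
  qed
  define S where "S = {p :: real \<times> real. 0 \<le> fst p \<and> 0 \<le> snd p}"
  have [measurable]: "S \<in> sets (borel \<Otimes>\<^sub>M borel)"
    unfolding borel_prod S_def by (rule borel_closed) (intro closed_Collect_conj closed_Collect_le continuous_intros)
  have indA: "indicator A \<omega> = indicator S (X \<omega>, Y \<omega>)" "indicator A \<omega> = indicator S (Y \<omega>, X \<omega>)" if "\<omega> \<in> space M" for \<omega>
    using that by (auto simp: A_def S_def indicator_def)
  have Q0tr: "measure M A = (\<integral>z. indicator S (\<Phi> z) \<partial>NN)"
  proof -
    have "measure M A = (\<integral>\<omega>. indicator A \<omega> \<partial>M)" by simp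
    also have "\<dots> = (\<integral>\<omega>. indicator S (X \<omega>, Y \<omega>) \<partial>M)"
      by (rule Bochner_Integration.integral_cong) (auto simp: indA(1))
    also have "\<dots> = (\<integral>z. indicator S (\<Phi> z) \<partial>NN)" by (rule tr) measurable
    finally show ?thesis .
  qed
  have rneq: "\<rho> \<noteq> -1"
  proof
    assume "\<rho> = -1"
    then have "a = 0" "b = 1" by (auto simp: a_def b_def)
    then have "indicator S (\<Phi> z) = (indicator {z. snd z = 0} z :: real)" for z
      by (auto simp: \<Phi>_def S_def indicator_def)
    then have "measure M A = (\<integral>z. indicator {z. snd z = 0} z \<partial>NN)" using Q0tr by simp
    also have "\<dots> = measure NN {z. snd z = 0}"
    proof -
      have [measurable]: "{z::real \<times> real. snd z = 0} \<in> sets (borel \<Otimes>\<^sub>M borel)"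
        unfolding borel_prod by (rule borel_closed) (intro closed_Collect_eq continuous_intros)
      interpret NNp: prob_space NN by (rule prob_NN)
      show ?thesis by (simp add: space_pair_measure)
    qed
    also have "\<dots> = 0" by (rule NN_snd0)
    finally show False using pos \<open>\<rho> = -1\<close> by (simp add: A_def)
  qed
  then have r3: "-1 < \<rho>" using r2 by simp
  have apos: "a > 0" using r3 by (simp add: a_def)
  have bnn: "b \<ge> 0" using r1 by (simp add: b_def)
  have a2: "a\<^sup>2 = (1+\<rho>)/2" using r2 by (simp add: a_def)
  have b2: "b\<^sup>2 = (1-\<rho>)/2" using r1 by (simp add: b_def)
  have ab1: "a\<^sup>2 + b\<^sup>2 = 1" using a2 b2 by simp
  have abr: "a\<^sup>2 - b\<^sup>2 = \<rho>" using a2 b2 by simp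
  have abs: "a * b = sqrt (1 - \<rho>\<^sup>2) / 2" using ab_prod[OF r2 r1] by (simp add: a_def b_def)
  define cc where "cc = b / a"
  have cc0: "cc \<ge> 0" using apos bnn by (simp add: cc_def)
  have reg: "indicator S (\<Phi> z) = (indicator (Rg cc) z :: real)" for z
    using region_eq[OF apos bnn, of "fst z" "snd z"] by (simp add: \<Phi>_def S_def Rg_def cc_def indicator_def)
  have j0v: "j0 cc = (arcsin \<rho> + pi/2) / (2 * pi)"
    unfolding cc_def a_def b_def using j0_val[OF r3 r1] .
  have Q0: "measure M A = j0 cc"
    using Q0tr has_bochner_integral_integral_eq[OF HB0[OF cc0]] by (simp add: reg)
  define q1 where "q1 = (\<integral>\<omega>. indicator A \<omega> * X \<omega> \<partial>M)"
  have q1sw: "q1 = (\<integral>\<omega>. indicator A \<omega> * Y \<omega> \<partial>M)"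
  proof -
    have "q1 = (\<integral>\<omega>. indicator S (X \<omega>, Y \<omega>) * fst (X \<omega>, Y \<omega>) \<partial>M)"
      unfolding q1_def by (rule Bochner_Integration.integral_cong) (auto simp: indA(1))
    also have "\<dots> = (\<integral>\<omega>. indicator S (Y \<omega>, X \<omega>) * fst (Y \<omega>, X \<omega>) \<partial>M)"
      by (rule sw[of "\<lambda>p. indicator S p * fst p"]) measurable
    also have "\<dots> = (\<integral>\<omega>. indicator A \<omega> * Y \<omega> \<partial>M)"
      by (rule Bochner_Integration.integral_cong) (auto simp: indA(2))
    finally show ?thesis .
  qed
  have "2 * q1 = (\<integral>\<omega>. indicator A \<omega> * X \<omega> + indicator A \<omega> * Y \<omega> \<partial>M)"
    using q1sw ind_bound[OF iX] ind_bound[OF iY] by (simp add: q1_def)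
  also have "\<dots> = (\<integral>\<omega>. indicator S (X \<omega>, Y \<omega>) * (fst (X \<omega>, Y \<omega>) + snd (X \<omega>, Y \<omega>)) \<partial>M)"
    by (rule Bochner_Integration.integral_cong) (auto simp: indA(1) distrib_left)
  also have "\<dots> = (\<integral>z. indicator S (\<Phi> z) * (fst (\<Phi> z) + snd (\<Phi> z)) \<partial>NN)"
    by (rule tr[of "\<lambda>p. indicator S p * (fst p + snd p)"]) measurable
  also have "\<dots> = (\<integral>z. (2 * a) * (indicator (Rg cc) z * fst z) \<partial>NN)"
    by (rule Bochner_Integration.integral_cong) (auto simp: reg Phi_fst Phi_snd algebra_simps)
  also have "\<dots> = (2 * a) * ju cc"
    using has_bochner_integral_integral_eq[OF has_bochner_integral_mult_right[OF HBu[OF cc0], of "2 * a"]] .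
  finally have Q1: "q1 = a * ju cc" by simp
  have Q1v: "q1 = (1 + \<rho>) / (2 * sqrt (2 * pi))"
    unfolding Q1 cc_def using ju_val[OF apos ab1] a2 by simp
  have HB23: "has_bochner_integral NN (\<lambda>z. indicator (Rg cc) z * (2 * a\<^sup>2 * (fst z)\<^sup>2 + 2 * b\<^sup>2 * (snd z)\<^sup>2)) (2 * (j0 cc + \<rho> * (a * b) / pi))
     \<and> has_bochner_integral NN (\<lambda>z. indicator (Rg cc) z * (a\<^sup>2 * (fst z)\<^sup>2 - b\<^sup>2 * (snd z)\<^sup>2)) (\<rho> * j0 cc + a * b / pi)"
  proof (cases "b = 0")
    case True
    then have r: "\<rho> = 1" using b2 by simp
    then have a1: "a\<^sup>2 = 1" using a2 by simp
    have k0: "ku cc = 0" using True by (simp add: cc_def ku_def)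
    have h: "has_bochner_integral NN (\<lambda>z. indicator (Rg cc) z * (fst z)\<^sup>2) (j0 cc)"
      using HBuu[OF cc0] k0 by simp
    show ?thesis
    proof
      show "has_bochner_integral NN (\<lambda>z. indicator (Rg cc) z * (2 * a\<^sup>2 * (fst z)\<^sup>2 + 2 * b\<^sup>2 * (snd z)\<^sup>2)) (2 * (j0 cc + \<rho> * (a * b) / pi))"
        using has_bochner_integral_mult_right[OF h, of 2] True a1 by (simp add: mult_ac)
      show "has_bochner_integral NN (\<lambda>z. indicator (Rg cc) z * (a\<^sup>2 * (fst z)\<^sup>2 - b\<^sup>2 * (snd z)\<^sup>2)) (\<rho> * j0 cc + a * b / pi)"
        using h True a1 r by simp
    qed
  next
    case False
    then have bpos: "b > 0" using bnn by simp
    then have ccp: "cc > 0" using apos by (simp add: cc_def)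
    have ku: "ku cc = a * b / pi" unfolding cc_def by (rule ku_val[OF apos ab1])
    have kv: "kv cc = a * b / pi" unfolding cc_def by (rule kv_val[OF apos bpos ab1])
    have hu: "has_bochner_integral NN (\<lambda>z. indicator (Rg cc) z * (fst z)\<^sup>2) (a * b / pi + j0 cc)"
      using HBuu[OF cc0] ku by simp
    have hv: "has_bochner_integral NN (\<lambda>z. indicator (Rg cc) z * (snd z)\<^sup>2) (j0 cc - a * b / pi)"
      using HBvv[OF ccp] kv by simp
    have e2: "2 * (j0 cc + \<rho> * (a * b) / pi) = 2 * a\<^sup>2 * (a * b / pi + j0 cc) + 2 * b\<^sup>2 * (j0 cc - a * b / pi)"
    proof -
      have "2 * a\<^sup>2 * (a * b / pi + j0 cc) + 2 * b\<^sup>2 * (j0 cc - a * b / pi) = 2 * j0 cc * (a\<^sup>2 + b\<^sup>2) + 2 * (a\<^sup>2 - b\<^sup>2) * (a * b / pi)"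
        by (simp add: algebra_simps)
      then show ?thesis using ab1 abr by simp
    qed
    have e3: "\<rho> * j0 cc + a * b / pi = a\<^sup>2 * (a * b / pi + j0 cc) - b\<^sup>2 * (j0 cc - a * b / pi)"
    proof -
      have "a\<^sup>2 * (a * b / pi + j0 cc) - b\<^sup>2 * (j0 cc - a * b / pi) = (a\<^sup>2 - b\<^sup>2) * j0 cc + (a\<^sup>2 + b\<^sup>2) * (a * b / pi)"
        by (simp add: algebra_simps)
      then show ?thesis using ab1 abr by simp
    qed
    show ?thesis
    proof
      have "has_bochner_integral NN (\<lambda>z. (2 * a\<^sup>2) * (indicator (Rg cc) z * (fst z)\<^sup>2) + (2 * b\<^sup>2) * (indicator (Rg cc) z * (snd z)\<^sup>2))
          (2 * a\<^sup>2 * (a * b / pi + j0 cc) + 2 * b\<^sup>2 * (j0 cc - a * b / pi))"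
        by (intro has_bochner_integral_add has_bochner_integral_mult_right hu hv)
      then show "has_bochner_integral NN (\<lambda>z. indicator (Rg cc) z * (2 * a\<^sup>2 * (fst z)\<^sup>2 + 2 * b\<^sup>2 * (snd z)\<^sup>2)) (2 * (j0 cc + \<rho> * (a * b) / pi))"
        unfolding e2 by (simp add: algebra_simps)
      have "has_bochner_integral NN (\<lambda>z. a\<^sup>2 * (indicator (Rg cc) z * (fst z)\<^sup>2) - b\<^sup>2 * (indicator (Rg cc) z * (snd z)\<^sup>2))
          (a\<^sup>2 * (a * b / pi + j0 cc) - b\<^sup>2 * (j0 cc - a * b / pi))"
        by (intro has_bochner_integral_diff has_bochner_integral_mult_right hu hv)
      then show "has_bochner_integral NN (\<lambda>z. indicator (Rg cc) z * (a\<^sup>2 * (fst z)\<^sup>2 - b\<^sup>2 * (snd z)\<^sup>2)) (\<rho> * j0 cc + a * b / pi)"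
        unfolding e3 by (simp add: algebra_simps)
    qed
  qed
  define q2 where "q2 = (\<integral>\<omega>. indicator A \<omega> * (X \<omega>)\<^sup>2 \<partial>M)"
  have q2sw: "q2 = (\<integral>\<omega>. indicator A \<omega> * (Y \<omega>)\<^sup>2 \<partial>M)"
  proof -
    have "q2 = (\<integral>\<omega>. indicator S (X \<omega>, Y \<omega>) * (fst (X \<omega>, Y \<omega>))\<^sup>2 \<partial>M)"
      unfolding q2_def by (rule Bochner_Integration.integral_cong) (auto simp: indA(1))
    also have "\<dots> = (\<integral>\<omega>. indicator S (Y \<omega>, X \<omega>) * (fst (Y \<omega>, X \<omega>))\<^sup>2 \<partial>M)"
      by (rule sw[of "\<lambda>p. indicator S p * (fst p)\<^sup>2"]) measurable
    also have "\<dots> = (\<integral>\<omega>. indicator A \<omega> * (Y \<omega>)\<^sup>2 \<partial>M)"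
      by (rule Bochner_Integration.integral_cong) (auto simp: indA(2))
    finally show ?thesis .
  qed
  have "2 * q2 = (\<integral>\<omega>. indicator A \<omega> * (X \<omega>)\<^sup>2 + indicator A \<omega> * (Y \<omega>)\<^sup>2 \<partial>M)"
    using q2sw ind_bound[OF iX2] ind_bound[OF iY2] by (simp add: q2_def)
  also have "\<dots> = (\<integral>\<omega>. indicator S (X \<omega>, Y \<omega>) * ((fst (X \<omega>, Y \<omega>))\<^sup>2 + (snd (X \<omega>, Y \<omega>))\<^sup>2) \<partial>M)"
    by (rule Bochner_Integration.integral_cong) (auto simp: indA(1) distrib_left)
  also have "\<dots> = (\<integral>z. indicator S (\<Phi> z) * ((fst (\<Phi> z))\<^sup>2 + (snd (\<Phi> z))\<^sup>2) \<partial>NN)"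
    by (rule tr[of "\<lambda>p. indicator S p * ((fst p)\<^sup>2 + (snd p)\<^sup>2)"]) measurable
  also have "\<dots> = (\<integral>z. indicator (Rg cc) z * (2 * a\<^sup>2 * (fst z)\<^sup>2 + 2 * b\<^sup>2 * (snd z)\<^sup>2) \<partial>NN)"
    by (rule Bochner_Integration.integral_cong) (auto simp: reg Phi_fst Phi_snd power2_eq_square algebra_simps)
  also have "\<dots> = 2 * (j0 cc + \<rho> * (a * b) / pi)"
    using has_bochner_integral_integral_eq HB23 by blast
  finally have Q2: "q2 = j0 cc + \<rho> * (a * b) / pi" by simp
  define q3 where "q3 = (\<integral>\<omega>. indicator A \<omega> * (X \<omega> * Y \<omega>) \<partial>M)"
  have "q3 = (\<integral>\<omega>. indicator S (X \<omega>, Y \<omega>) * (fst (X \<omega>, Y \<omega>) * snd (X \<omega>, Y \<omega>)) \<partial>M)"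
    unfolding q3_def by (rule Bochner_Integration.integral_cong) (auto simp: indA(1))
  also have "\<dots> = (\<integral>z. indicator S (\<Phi> z) * (fst (\<Phi> z) * snd (\<Phi> z)) \<partial>NN)"
    by (rule tr[of "\<lambda>p. indicator S p * (fst p * snd p)"]) measurable
  also have "\<dots> = (\<integral>z. indicator (Rg cc) z * (a\<^sup>2 * (fst z)\<^sup>2 - b\<^sup>2 * (snd z)\<^sup>2) \<partial>NN)"
    by (rule Bochner_Integration.integral_cong) (auto simp: reg Phi_fst Phi_snd power2_eq_square algebra_simps)
  also have "\<dots> = \<rho> * j0 cc + a * b / pi"
    using has_bochner_integral_integral_eq HB23 by blast
  finally have Q3: "q3 = \<rho> * j0 cc + a * b / pi" .
  have CS: "q1\<^sup>2 \<le> measure M A * q2"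
  proof -
    define k where "k = q1 / measure M A"
    have "arcsin (-1) < arcsin \<rho>" by (rule arcsin_less_arcsin) (use r3 r1 in auto)
    then have "0 < arcsin \<rho> + pi/2" by simp
    then have "0 < (arcsin \<rho> + pi/2) / (2 * pi)" by (intro divide_pos_pos) auto
    then have mpos: "measure M A > 0" using Q0 j0v by simp
    have "0 \<le> (\<integral>\<omega>. indicator A \<omega> * (X \<omega> - k)\<^sup>2 \<partial>M)" by simp
    also have "(\<integral>\<omega>. indicator A \<omega> * (X \<omega> - k)\<^sup>2 \<partial>M) = (\<integral>\<omega>. indicator A \<omega> * (X \<omega>)\<^sup>2 - (2 * k) * (indicator A \<omega> * X \<omega>) + k\<^sup>2 * indicator A \<omega> \<partial>M)"
      by (rule Bochner_Integration.integral_cong) (auto simp: power2_eq_square algebra_simps)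
    also have "\<dots> = q2 - 2 * k * q1 + k\<^sup>2 * measure M A"
    proof -
      have i1: "integrable M (\<lambda>\<omega>. indicator A \<omega> * (X \<omega>)\<^sup>2)" by (rule ind_bound[OF iX2])
      have i2: "integrable M (\<lambda>\<omega>. (2 * k) * (indicator A \<omega> * X \<omega>))" using ind_bound[OF iX] by simp
      have "integrable M (\<lambda>\<omega>. indicator A \<omega> :: real)"
        by (rule int_bounded[where K=1, OF P]) (auto simp: indicator_def)
      then have i3: "integrable M (\<lambda>\<omega>. k\<^sup>2 * indicator A \<omega>)" by simp
      have i12: "integrable M (\<lambda>\<omega>. indicator A \<omega> * (X \<omega>)\<^sup>2 - (2 * k) * (indicator A \<omega> * X \<omega>))" using i1 i2 by simp
      have "(\<integral>\<omega>. indicator A \<omega> * (X \<omega>)\<^sup>2 - (2 * k) * (indicator A \<omega> * X \<omega>) + k\<^sup>2 * indicator A \<omega> \<partial>M)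
          = (\<integral>\<omega>. indicator A \<omega> * (X \<omega>)\<^sup>2 - (2 * k) * (indicator A \<omega> * X \<omega>) \<partial>M) + (\<integral>\<omega>. k\<^sup>2 * indicator A \<omega> \<partial>M)"
        by (rule Bochner_Integration.integral_add[OF i12 i3])
      also have "(\<integral>\<omega>. indicator A \<omega> * (X \<omega>)\<^sup>2 - (2 * k) * (indicator A \<omega> * X \<omega>) \<partial>M) = q2 - (\<integral>\<omega>. (2 * k) * (indicator A \<omega> * X \<omega>) \<partial>M)"
        unfolding q2_def by (rule Bochner_Integration.integral_diff[OF i1 i2])
      also have "(\<integral>\<omega>. (2 * k) * (indicator A \<omega> * X \<omega>) \<partial>M) = 2 * k * q1" by (simp add: q1_def)
      also have "(\<integral>\<omega>. k\<^sup>2 * indicator A \<omega> \<partial>M) = k\<^sup>2 * measure M A" by simp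
      finally show ?thesis .
    qed
    finally have "0 \<le> q2 - 2 * k * q1 + k\<^sup>2 * measure M A" .
    then have "0 \<le> measure M A * (q2 - 2 * k * q1 + k\<^sup>2 * measure M A)" using mpos by simp
    then show ?thesis using mpos by (simp add: k_def power2_eq_square field_simps)
  qed
  have F0: "measure M A = (arcsin \<rho> + pi/2) / (2 * pi)" using Q0 j0v by simp
  have F2: "q2 = (pi/2 + arcsin \<rho> + \<rho> * sqrt (1 - \<rho>\<^sup>2)) / (2 * pi)"
    unfolding Q2 j0v abs by (simp add: field_simps)
  have F3: "q3 = (\<rho> * (pi/2 + arcsin \<rho>) + sqrt (1 - \<rho>\<^sup>2)) / (2 * pi)"
    unfolding Q3 j0v abs by (simp add: field_simps)
  show ?thesis
    unfolding q1_def[symmetric] q2_def[symmetric] q3_def[symmetric]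
    using r3 r1 F0 Q1v F2 F3 CS by simp
qed

lemma frac_cancel: "(c::real) \<noteq> 0 \<Longrightarrow> (N / c) / (D / c) = N / D"
  by (cases "D = 0") (simp_all add: field_simps)

lemma final_alg:
  fixes \<rho> P I1 I2 I3 P0 I0 :: real
  assumes r: "-1 < \<rho>" "\<rho> \<le> 1"
    and P: "P = (arcsin \<rho> + pi/2) / (2 * pi)"
    and I1: "I1 = (1 + \<rho>) / (2 * sqrt (2 * pi))"
    and I2: "I2 = (pi/2 + arcsin \<rho> + \<rho> * sqrt (1 - \<rho>\<^sup>2)) / (2 * pi)"
    and I3: "I3 = (\<rho> * (pi/2 + arcsin \<rho>) + sqrt (1 - \<rho>\<^sup>2)) / (2 * pi)"
    and CS: "I1\<^sup>2 \<le> P * I2"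
    and P0: "P0 = (arcsin 1 + pi/2) / (2 * pi)"
    and I0: "I0 = (1 + 1) / (2 * sqrt (2 * pi))"
  shows "I1 / P = sqrt (pi / 2) * (1 + \<rho>) / (arcsin \<rho> + pi / 2)"
    and "I3 / P - I1 / P * (I1 / P) = \<rho> + sqrt (1 - \<rho>\<^sup>2) / (arcsin \<rho> + pi / 2) - pi / 2 * (1 + \<rho>)\<^sup>2 / (arcsin \<rho> + pi / 2)\<^sup>2"
    and "(I2 / P + I2 / P) / 2 - I3 / P = (1 - \<rho>) * (1 - sqrt (1 - \<rho>\<^sup>2) / (arcsin \<rho> + pi / 2))"
    and "(I3 / P) / (I0 / P0)\<^sup>2 = pi / 2 * (\<rho> + sqrt (1 - \<rho>\<^sup>2) / (arcsin \<rho> + pi / 2))"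
    and "(I3 / P - I1 / P * (I1 / P)) / (sqrt (I2 / P - (I1 / P)\<^sup>2) * sqrt (I2 / P - (I1 / P)\<^sup>2)) =
      (\<rho> * (arcsin \<rho> + pi / 2)\<^sup>2 + sqrt (1 - \<rho>\<^sup>2) * (arcsin \<rho> + pi / 2) - pi / 2 * (1 + \<rho>)\<^sup>2) /
      ((arcsin \<rho> + pi / 2)\<^sup>2 + \<rho> * sqrt (1 - \<rho>\<^sup>2) * (arcsin \<rho> + pi / 2) - pi / 2 * (1 + \<rho>)\<^sup>2)"
proof -
  define A where "A = arcsin \<rho> + pi / 2"
  define s where "s = sqrt (1 - \<rho>\<^sup>2)"
  have "arcsin (-1) < arcsin \<rho>" by (rule arcsin_less_arcsin) (use r in auto)
  then have Apos: "A > 0" by (simp add: A_def)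
  have Ppos: "P > 0" using Apos by (simp add: P A_def[symmetric])
  have sq: "sqrt (pi/2) * sqrt (2*pi) = pi"
  proof -
    have "sqrt (pi/2) * sqrt (2*pi) = sqrt (pi\<^sup>2)" by (simp add: real_sqrt_mult[symmetric] power2_eq_square)
    then show ?thesis by simp
  qed
  have s2: "sqrt (pi/2) * sqrt (pi/2) = pi/2" by simp
  have s2pi: "sqrt (2*pi) > 0" by simp
  have ke: "I1 / P = sqrt (pi / 2) * (1 + \<rho>) / A"
  proof -
    have "I1 / P = (1 + \<rho>) * pi / (sqrt (2 * pi) * A)"
      using Apos s2pi by (simp add: I1 P A_def[symmetric] field_simps)
    also have "pi / sqrt (2 * pi) = sqrt (pi/2)" using sq s2pi by (simp add: field_simps)
    then have "(1 + \<rho>) * pi / (sqrt (2 * pi) * A) = sqrt (pi / 2) * (1 + \<rho>) / A"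
      using s2pi Apos by (simp add: field_simps)
    finally show ?thesis .
  qed
  have kc: "I3 / P = \<rho> + s / A"
    using Apos by (simp add: I3 P A_def[symmetric] s_def[symmetric] field_simps)
  have kv: "I2 / P = 1 + \<rho> * s / A"
    using Apos by (simp add: I2 P A_def[symmetric] s_def[symmetric] field_simps)
  have ke2: "I1 / P * (I1 / P) = pi / 2 * (1 + \<rho>)\<^sup>2 / A\<^sup>2"
    unfolding ke using s2 Apos by (simp add: power2_eq_square field_simps)
  show "I1 / P = sqrt (pi / 2) * (1 + \<rho>) / (arcsin \<rho> + pi / 2)" using ke by (simp add: A_def)
  show "I3 / P - I1 / P * (I1 / P) = \<rho> + sqrt (1 - \<rho>\<^sup>2) / (arcsin \<rho> + pi / 2) - pi / 2 * (1 + \<rho>)\<^sup>2 / (arcsin \<rho> + pi / 2)\<^sup>2"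
    unfolding ke2 kc by (simp add: A_def s_def)
  show "(I2 / P + I2 / P) / 2 - I3 / P = (1 - \<rho>) * (1 - sqrt (1 - \<rho>\<^sup>2) / (arcsin \<rho> + pi / 2))"
    unfolding kv kc using Apos by (simp add: A_def[symmetric] s_def[symmetric] field_simps)
  have m2: "(I0 / P0)\<^sup>2 = 2 / pi"
  proof -
    have "I0 / P0 = 2 / sqrt (2 * pi)" by (simp add: I0 P0 field_simps)
    then have "(I0 / P0)\<^sup>2 = 4 / (sqrt (2 * pi))\<^sup>2" by (simp add: power_divide)
    then show ?thesis by simp
  qed
  show "(I3 / P) / (I0 / P0)\<^sup>2 = pi / 2 * (\<rho> + sqrt (1 - \<rho>\<^sup>2) / (arcsin \<rho> + pi / 2))"
    unfolding m2 kc by (simp add: A_def[symmetric] s_def[symmetric] field_simps)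
  have qnn: "0 \<le> I2 / P - (I1 / P)\<^sup>2"
  proof -
    have "(I1 / P)\<^sup>2 = I1\<^sup>2 / P\<^sup>2" by (simp add: power_divide)
    also have "\<dots> \<le> P * I2 / P\<^sup>2" using CS Ppos by (simp add: divide_right_mono)
    also have "\<dots> = I2 / P" using Ppos by (simp add: power2_eq_square)
    finally show ?thesis by simp
  qed
  have sqq: "sqrt (I2 / P - (I1 / P)\<^sup>2) * sqrt (I2 / P - (I1 / P)\<^sup>2) = I2 / P - (I1 / P)\<^sup>2"
    using qnn by simp
  have N: "I3 / P - I1 / P * (I1 / P) = (\<rho> * A\<^sup>2 + s * A - pi / 2 * (1 + \<rho>)\<^sup>2) / A\<^sup>2"
    unfolding ke2 kc using Apos by (simp add: field_simps power2_eq_square)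
  have D: "I2 / P - (I1 / P)\<^sup>2 = (A\<^sup>2 + \<rho> * s * A - pi / 2 * (1 + \<rho>)\<^sup>2) / A\<^sup>2"
    using ke2 unfolding kv power2_eq_square[of "I1 / P"] using Apos by (simp add: field_simps power2_eq_square)
  show "(I3 / P - I1 / P * (I1 / P)) / (sqrt (I2 / P - (I1 / P)\<^sup>2) * sqrt (I2 / P - (I1 / P)\<^sup>2)) =
      (\<rho> * (arcsin \<rho> + pi / 2)\<^sup>2 + sqrt (1 - \<rho>\<^sup>2) * (arcsin \<rho> + pi / 2) - pi / 2 * (1 + \<rho>)\<^sup>2) /
      ((arcsin \<rho> + pi / 2)\<^sup>2 + \<rho> * sqrt (1 - \<rho>\<^sup>2) * (arcsin \<rho> + pi / 2) - pi / 2 * (1 + \<rho>)\<^sup>2)"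
    unfolding sqq unfolding N D using Apos by (simp add: frac_cancel A_def[symmetric] s_def[symmetric])
qed

theorem theorem4p1:
  fixes M :: "'w measure" and Z :: "'a::euclidean_space \<Rightarrow> 'w \<Rightarrow> real"
    and R :: "real \<Rightarrow> real" and h :: 'a and r :: real
  assumes gauss: "gaussian_field M Z"
    and centered: "\<And>x. (\<integral>\<omega>. Z x \<omega> \<partial>M) = 0"
    and cov: "\<And>x y. (\<integral>\<omega>. Z x \<omega> * Z y \<omega> \<partial>M) = R (norm (x - y))"
    and unit_var: "R 0 = 1"
    and r_def: "r = norm h"
    and nondeg: "measure M (event_A M Z h) > 0"
  shows "(mark_E M Z h = sqrt (pi / 2) * (1 + R r) / (arcsin (R r) + pi / 2)) \<and>
      (mark_cov M Z h = R r + sqrt (1 - (R r)\<^sup>2) / (arcsin (R r) + pi / 2)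
           - pi / 2 * (1 + R r)\<^sup>2 / (arcsin (R r) + pi / 2)\<^sup>2) \<and>
      (mark_variogram M Z h = (1 - R r) * (1 - sqrt (1 - (R r)\<^sup>2) / (arcsin (R r) + pi / 2))) \<and>
      (stoyan_kmm M Z h = pi / 2 * (R r + sqrt (1 - (R r)\<^sup>2) / (arcsin (R r) + pi / 2))) \<and>
      (mark_cor M Z h =
           (R r * (arcsin (R r) + pi / 2)\<^sup>2 + sqrt (1 - (R r)\<^sup>2) * (arcsin (R r) + pi / 2)
              - pi / 2 * (1 + R r)\<^sup>2) /
           ((arcsin (R r) + pi / 2)\<^sup>2 + R r * sqrt (1 - (R r)\<^sup>2) * (arcsin (R r) + pi / 2)
              - pi / 2 * (1 + R r)\<^sup>2))"
proof -
  have P: "prob_space M" and G: "\<And>F c. finite F \<Longrightarrow> real_normal_rv M (\<lambda>\<omega>. \<Sum>x\<in>F. c x * Z x \<omega>)"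
    using gauss unfolding gaussian_field_def by auto
  have lin: "real_normal_rv M (\<lambda>\<omega>. s * Z x \<omega> + t * Z y \<omega>)" for x y s t
  proof (cases "x = y")
    case True
    have "(\<lambda>\<omega>. s * Z x \<omega> + t * Z y \<omega>) = (\<lambda>\<omega>. \<Sum>z\<in>{x}. (\<lambda>_. s + t) z * Z z \<omega>)"
      using True by (simp add: fun_eq_iff algebra_simps)
    then show ?thesis using G[of "{x}" "\<lambda>_. s + t"] by simp
  next
    case False
    have "(\<lambda>\<omega>. s * Z x \<omega> + t * Z y \<omega>) = (\<lambda>\<omega>. \<Sum>z\<in>{x, y}. (\<lambda>z. if z = x then s else t) z * Z z \<omega>)"
      using False by (simp add: fun_eq_iff)
    then show ?thesis using G[of "{x, y}" "\<lambda>z. if z = x then s else t"] by simp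
  qed
  have one: "(\<integral>\<omega>. Z x \<omega> * Z x \<omega> \<partial>M) = 1" for x using cov[of x x] unit_var by simp
  have c1: "(\<integral>\<omega>. Z 0 \<omega> * Z h \<omega> \<partial>M) = R r" using cov[of 0 h] r_def by simp
  have c2: "(\<integral>\<omega>. Z 0 \<omega> * Z (-h) \<omega> \<partial>M) = R r" using cov[of 0 "-h"] r_def by simp
  have c0: "(\<integral>\<omega>. Z 0 \<omega> * Z 0 \<omega> \<partial>M) = 1" by (rule one)
  have pos1: "measure M {\<omega> \<in> space M. Z 0 \<omega> \<ge> 0 \<and> Z h \<omega> \<ge> 0} > 0 \<or> -1 < R r"
    using nondeg by (simp add: event_A_def)
  note PM1 = pair_main[OF P lin centered[of 0] centered[of h] one one c1 pos1]
  have r: "-1 < R r" "R r \<le> 1" using PM1 by auto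
  have pos2: "measure M {\<omega> \<in> space M. Z 0 \<omega> \<ge> 0 \<and> Z (-h) \<omega> \<ge> 0} > 0 \<or> -1 < R r"
    using r by simp
  note PM2 = pair_main[OF P lin centered[of 0] centered[of "-h"] one one c2 pos2]
  have pos0: "measure M {\<omega> \<in> space M. Z 0 \<omega> \<ge> 0 \<and> Z 0 \<omega> \<ge> 0} > 0 \<or> -1 < (1::real)" by simp
  note PM0 = pair_main[OF P lin centered[of 0] centered[of 0] one one c0 pos0]
  have EA: "event_A M Z h = {\<omega> \<in> space M. Z 0 \<omega> \<ge> 0 \<and> Z h \<omega> \<ge> 0}" "event_A M Z (-h) = {\<omega> \<in> space M. Z 0 \<omega> \<ge> 0 \<and> Z (-h) \<omega> \<ge> 0}"
    by (simp_all add: event_A_def)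
  have E0: "{\<omega> \<in> space M. Z 0 \<omega> \<ge> 0} = {\<omega> \<in> space M. Z 0 \<omega> \<ge> 0 \<and> Z 0 \<omega> \<ge> 0}" by simp
  define Pa where "Pa = measure M (event_A M Z h)"
  define I1 where "I1 = (\<integral>\<omega>. indicator (event_A M Z h) \<omega> * Z 0 \<omega> \<partial>M)"
  define I2 where "I2 = (\<integral>\<omega>. indicator (event_A M Z h) \<omega> * (Z 0 \<omega>)\<^sup>2 \<partial>M)"
  define I3 where "I3 = (\<integral>\<omega>. indicator (event_A M Z h) \<omega> * (Z 0 \<omega> * Z h \<omega>) \<partial>M)"
  define Pb where "Pb = measure M (event_A M Z (-h))"
  define J1 where "J1 = (\<integral>\<omega>. indicator (event_A M Z (-h)) \<omega> * Z 0 \<omega> \<partial>M)"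
  define J2 where "J2 = (\<integral>\<omega>. indicator (event_A M Z (-h)) \<omega> * (Z 0 \<omega>)\<^sup>2 \<partial>M)"
  define P0 where "P0 = measure M {\<omega> \<in> space M. Z 0 \<omega> \<ge> 0}"
  define I0 where "I0 = (\<integral>\<omega>. indicator {\<omega> \<in> space M. Z 0 \<omega> \<ge> 0} \<omega> * Z 0 \<omega> \<partial>M)"
  have V1: "Pa = (arcsin (R r) + pi/2) / (2 * pi)" "I1 = (1 + R r) / (2 * sqrt (2 * pi))"
    "I2 = (pi/2 + arcsin (R r) + R r * sqrt (1 - (R r)\<^sup>2)) / (2 * pi)"
    "I3 = (R r * (pi/2 + arcsin (R r)) + sqrt (1 - (R r)\<^sup>2)) / (2 * pi)"
    "I1\<^sup>2 \<le> Pa * I2"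
    using PM1 unfolding Pa_def I1_def I2_def I3_def EA by auto
  have V2: "Pb = Pa" "J1 = I1" "J2 = I2"
    using PM2 V1 unfolding Pb_def J1_def J2_def EA by auto
  have V0: "P0 = (arcsin 1 + pi/2) / (2 * pi)" "I0 = (1 + 1) / (2 * sqrt (2 * pi))"
    using PM0 unfolding P0_def I0_def E0 by auto
  have defs: "mark_E M Z h = I1 / Pa" "kappa_e M Z h = I1 / Pa" "kappa_e M Z (-h) = I1 / Pa"
    "kappa_c M Z h = I3 / Pa" "kappa_v M Z h = I2 / Pa" "kappa_v M Z (-h) = I2 / Pa"
    "mean_mark M Z = I0 / P0"
    using V2 by (simp_all add: mark_E_def kappa_e_def kappa_c_def kappa_v_def mean_mark_def cond_exp_event_def
        Pa_def I1_def I2_def I3_def Pb_def J1_def J2_def P0_def I0_def)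
  note FA = final_alg[OF r V1(1-4) V1(5) V0]
  show ?thesis
    unfolding mark_cov_def mark_variogram_def stoyan_kmm_def mark_cor_def defs
    using FA by simp
qed

end
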